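(* Algorithm DLE solves the disconnecting leader election problem: for every fair execution starting from a permitted initial configuration, all particles eventually reach a final state, and a configuration is reached in which exactly one particle has status $leader$ and all other particles have status $follower$.
   Context: Geometry. The triangular grid $G$ has as vertices ("points") the points of the regular triangular lattice in the plane, adjacent iff at unit distance; each point has six incident edges, cyclically ordered clockwise. A shape is a finite set of points (identified with its induced subgraph). For a connected shape $S$: the unbounded face is the outer face; a bounded face containing a grid point not in $S$ is a hole, whose grid points are hole points; the area of $S$ is $S$ together with its hole points; $S$ is simply-connected if it has no holes; the outer boundary is the set of points of $S$ on the boundary of the outer face; a boundary point is a point of $S$ adjacent to a point not in $S$. For a boundary point $v$, a local boundary $B$ of $v$ w.r.t. $S$ is a maximal clockwise cyclic interval of consecutive edges at $v$ leading to points not in $S$, with boundary count $c(v,B)=|B|-2$. $v$ is redundant if its neighbors in $S$ induce a connected subgraph; erodable if redundant and on the outer boundary (then it has a single local boundary $B$); SCE (strictly convex and erodable) if erodable and $c(v,B)>0$. Model (amoebot, strong scheduler). Anonymous particles with constant memory each occupy one point (contracted) or two adjacent points (expanded; a head and a tail); no point is occupied twice. Each particle labels the edges at its occupied point by ports $0,\dots,5$; all particles share the same (clockwise) chirality, and a particle knows the port number a neighboring particle uses for their common edge. Particles communicate by reading and writing the memories of neighboring particles. A contracted particle may expand into an adjacent unoccupied point (which becomes its head); an expanded particle may contract into either of its points; handovers between an expanded and a contracted neighbor are allowed. An execution is a sequence of atomic activations of single particles; in an activation a particle reads its neighbors' memories, computes, updates its own and neighbors' memories, and performs at most one movement. A particle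 in a final state does nothing when activated. An execution is fair if each particle is activated infinitely often; a round is a minimal execution fragment in which every particle is activated at least once. A permitted initial configuration $C_0$ has all particles contracted, at least one particle, and the set $S_P(C_0)$ of occupied points connected. Input: each particle knows, for each port $i$, whether the point reached via port $i$ lies in the outer face of $S_P(C_0)$. The system's shape need not remain connected. Disconnecting leader election: each particle has an output $status \in \{undecided, leader, follower\}$; the goal predicate is that exactly one particle is $leader$ and all others are $follower$. An algorithm solves it if in every fair execution all particles reach a final state and a configuration satisfying the predicate is reached. Algorithm DLE. It maintains a set $S_e$ of eligible points, initially the area of $S_P(C_0)$; points are only removed, never added. Each particle $p$ has $status$ (initially $undecided$) and $eligible[0..5]$ (initially $eligible[i]$ true iff the point via port $i$ is not in the outer face of $S_P(C_0)$), referring to points adjacent to $p$'s head. On activation: (a) if $p$ is expanded, it contracts into its head; (b) else if $p$ and all its neighbors have status $\ne undecided$, $p$ terminates (enters a final state); (c) else if $p.status=undecided$ ($p$ contracted at point $v$): if by its $eligible$ array no neighbor of $v$ is in $S_e$, it sets $status:=leader$; else if $v$ is SCE w.r.t. $S_e$, then $v$ is removed from $S_e$ and every neighboring particle whose head is adjacent to $v$ sets its $eligible$ entry for $v$ to false; then, if $v$ has an adjacent point $u\in S_e$ not occupied by any particle, $p$ sets its $eligible$ entries to true except the one for the port from $u$ back to $v$ (set false) and expands into $u$; otherwise $p$ sets $status:=follower$. In all other cases $p$ does nothing. *)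

theory Defs
  imports Main
begin

text \<open>Points of the triangular lattice in axial coordinates: (a,b) stands for
  a*e1 + b*e2 with e1 = (1,0), e2 = (1/2, sqrt 3 / 2).  The six unit directions
  are indexed 0..5 in clockwise order (indices taken mod 6).\<close>

type_synonym point = "int \<times> int"

definition dir :: "nat \<Rightarrow> point" where
  "dir i = (let k = i mod 6 in
     if k = 0 then (1, 0) else if k = 1 then (1, -1) else if k = 2 then (0, -1)
     else if k = 3 then (-1, 0) else if k = 4 then (-1, 1) else (0, 1))"

definition nb :: "point \<Rightarrow> nat \<Rightarrow> point" where
  "nb v i = (fst v + fst (dir i), snd v + snd (dir i))"

definition adj :: "point \<Rightarrow> point \<Rightarrow> bool" where
  "adj u w \<longleftrightarrow> (\<exists>i<6. w = nb u i)"

definition induced_edges :: "point set \<Rightarrow> (point \<times> point) set" where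
  "induced_edges A = {(x, y). x \<in> A \<and> y \<in> A \<and> adj x y}"

definition connected_pts :: "point set \<Rightarrow> bool" where
  "connected_pts A \<longleftrightarrow> (\<forall>x\<in>A. \<forall>y\<in>A. (x, y) \<in> (induced_edges A)\<^sup>*)"

definition outer_face :: "point set \<Rightarrow> point \<Rightarrow> bool" where
  "outer_face S p \<longleftrightarrow> p \<notin> S \<and> infinite {q. (p, q) \<in> (induced_edges (- S))\<^sup>*}"

text \<open>Area: S together with its hole points, i.e. all grid points not in the outer face.\<close>
definition area :: "point set \<Rightarrow> point set" where
  "area S = {p. \<not> outer_face S p}"

definition outer_boundary :: "point set \<Rightarrow> point set" where
  "outer_boundary S = {v \<in> S. \<exists>i<6. outer_face S (nb v i)}"

definition boundary_point :: "point set \<Rightarrow> point \<Rightarrow> bool" where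
  "boundary_point S v \<longleftrightarrow> v \<in> S \<and> (\<exists>i<6. nb v i \<notin> S)"

definition redundant :: "point set \<Rightarrow> point \<Rightarrow> bool" where
  "redundant S v \<longleftrightarrow> boundary_point S v \<and> connected_pts {nb v i | i. i < 6 \<and> nb v i \<in> S}"

definition out_dirs :: "point set \<Rightarrow> point \<Rightarrow> nat set" where
  "out_dirs S v = {i. i < 6 \<and> nb v i \<notin> S}"

definition cyc_int :: "nat \<Rightarrow> nat \<Rightarrow> nat set" where
  "cyc_int i k = {(i + j) mod 6 | j. j < k}"

definition is_cyc_int :: "nat set \<Rightarrow> bool" where
  "is_cyc_int B \<longleftrightarrow> (\<exists>i<6. \<exists>k. 1 \<le> k \<and> k \<le> 6 \<and> B = cyc_int i k)"

definition local_boundary :: "point set \<Rightarrow> point \<Rightarrow> nat set \<Rightarrow> bool" where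
  "local_boundary S v B \<longleftrightarrow> boundary_point S v \<and> is_cyc_int B \<and> B \<subseteq> out_dirs S v \<and>
     (\<forall>B'. is_cyc_int B' \<and> B' \<subseteq> out_dirs S v \<and> B \<subseteq> B' \<longrightarrow> B' = B)"

definition bcount :: "nat set \<Rightarrow> int" where
  "bcount B = int (card B) - 2"

definition erodable :: "point set \<Rightarrow> point \<Rightarrow> bool" where
  "erodable S v \<longleftrightarrow> redundant S v \<and> v \<in> outer_boundary S"

definition SCE :: "point set \<Rightarrow> point \<Rightarrow> bool" where
  "SCE S v \<longleftrightarrow> erodable S v \<and> (\<exists>B. local_boundary S v B \<and> bcount B > 0)"

datatype pstatus = Undecided | Leader | Follower

text \<open>A configuration: head and tail of each particle (equal iff contracted),
  memory (status, eligible array indexed by the particle's ports 0..5, final flag),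
  and the (ghost) set S_e of eligible points maintained by algorithm DLE.\<close>
record 'p config =
  phead :: "'p \<Rightarrow> point"
  ptail :: "'p \<Rightarrow> point"
  st    :: "'p \<Rightarrow> pstatus"
  elig  :: "'p \<Rightarrow> nat \<Rightarrow> bool"
  fin   :: "'p \<Rightarrow> bool"
  Se    :: "point set"

text \<open>Port labelling: all particles share clockwise chirality; particle p's port i
  corresponds to global direction (i + off p) mod 6.\<close>
definition port_pt :: "('p \<Rightarrow> nat) \<Rightarrow> 'p \<Rightarrow> point \<Rightarrow> nat \<Rightarrow> point" where
  "port_pt off p x i = nb x (i + off p)"

definition contracted :: "'p config \<Rightarrow> 'p \<Rightarrow> bool" where
  "contracted c p \<longleftrightarrow> phead c p = ptail c p"

definition occupied :: "'p set \<Rightarrow> 'p config \<Rightarrow> point set" where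
  "occupied P c = phead c ` P \<union> ptail c ` P"

definition neighbours :: "'p set \<Rightarrow> 'p config \<Rightarrow> 'p \<Rightarrow> 'p set" where
  "neighbours P c p = {q \<in> P. q \<noteq> p \<and>
     (\<exists>x\<in>{phead c p, ptail c p}. \<exists>y\<in>{phead c q, ptail c q}. adj x y)}"

definition dle_succ :: "'p set \<Rightarrow> ('p \<Rightarrow> nat) \<Rightarrow> 'p config \<Rightarrow> 'p \<Rightarrow> 'p config set" where
  "dle_succ P off c p =
    (if fin c p then {c}
     else if \<not> contracted c p then {c\<lparr>ptail := (ptail c)(p := phead c p)\<rparr>}
     else if st c p \<noteq> Undecided \<and> (\<forall>q\<in>neighbours P c p. st c q \<noteq> Undecided)
       then {c\<lparr>fin := (fin c)(p := True)\<rparr>}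
     else if st c p = Undecided then
       (let v = phead c p in
        if (\<forall>i<6. \<not> elig c p i) then {c\<lparr>st := (st c)(p := Leader)\<rparr>}
        else if SCE (Se c) v then
          (let S' = Se c - {v};
               \<comment> \<open>every particle whose head is adjacent to v sets its eligible entry for v to false\<close>
               E' = (\<lambda>q j. elig c q j \<and> \<not> (adj (phead c q) v \<and> port_pt off q (phead c q) j = v));
               U = {u. adj v u \<and> u \<in> S' \<and> u \<notin> occupied P c}
           in if U \<noteq> {} then
                {c\<lparr>Se := S',
                   elig := E'(p := (\<lambda>j. port_pt off p u j \<noteq> v)),
                   phead := (phead c)(p := u)\<rparr> | u. u \<in> U}
              else {c\<lparr>Se := S', elig := E', st := (st c)(p := Follower)\<rparr>})
        else {c})
     else {c})"

definition permitted_init :: "'p set \<Rightarrow> ('p \<Rightarrow> nat) \<Rightarrow> 'p config \<Rightarrow> bool" where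
  "permitted_init P off c0 \<longleftrightarrow>
     finite P \<and> P \<noteq> {} \<and> inj_on (phead c0) P \<and>
     (\<forall>p\<in>P. contracted c0 p) \<and> connected_pts (phead c0 ` P) \<and>
     (\<forall>p\<in>P. st c0 p = Undecided \<and> \<not> fin c0 p \<and>
        (\<forall>i<6. elig c0 p i \<longleftrightarrow> \<not> outer_face (phead c0 ` P) (port_pt off p (phead c0 p) i))) \<and>
     Se c0 = area (phead c0 ` P)"

definition fair_exec :: "'p set \<Rightarrow> ('p \<Rightarrow> nat) \<Rightarrow> (nat \<Rightarrow> 'p config) \<Rightarrow> (nat \<Rightarrow> 'p) \<Rightarrow> bool" where
  "fair_exec P off c a \<longleftrightarrow>
     (\<forall>n. a n \<in> P \<and> c (Suc n) \<in> dle_succ P off (c n) (a n)) \<and>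
     (\<forall>p\<in>P. \<forall>n. \<exists>m\<ge>n. a m = p)"

end

theory Submission
  imports Defs
begin


lemma dir_mod: "dir (i mod 6) = dir i"
  by (simp add: dir_def)

lemma nb_mod: "nb v (i mod 6) = nb v i"
  by (simp add: nb_def dir_mod)

lemma nb_simps:
  "nb (a,b) i = (let k = i mod 6 in
     if k = 0 then (a+1, b) else if k = 1 then (a+1, b-1) else if k = 2 then (a, b-1)
     else if k = 3 then (a-1, b) else if k = 4 then (a-1, b+1) else (a, b+1))"
  by (simp add: nb_def dir_def Let_def)

lemma nb_cases:
  obtains "i mod 6 = 0" "nb v i = (fst v + 1, snd v)"
  | "i mod 6 = 1" "nb v i = (fst v + 1, snd v - 1)"
  | "i mod 6 = 2" "nb v i = (fst v, snd v - 1)"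
  | "i mod 6 = 3" "nb v i = (fst v - 1, snd v)"
  | "i mod 6 = 4" "nb v i = (fst v - 1, snd v + 1)"
  | "i mod 6 = 5" "nb v i = (fst v, snd v + 1)"
proof -
  have "i mod 6 < 6" by simp
  then have "i mod 6 = 0 \<or> i mod 6 = 1 \<or> i mod 6 = 2 \<or> i mod 6 = 3 \<or> i mod 6 = 4 \<or> i mod 6 = 5" by linarith
  then show ?thesis using that by (cases v) (auto simp: nb_def dir_def Let_def)
qed

lemma nb_back: "nb (nb v i) (i + 3) = v"
proof -
  have "(i+3) mod 6 = (i mod 6 + 3) mod 6" by presburger
  then show ?thesis by (cases rule: nb_cases[of i v]) (auto simp: nb_def dir_def Let_def)
qed

lemma nb_consec: "nb (nb v i) (i + 2) = nb v (i + 1)"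
proof -
  have "(i+2) mod 6 = (i mod 6 + 2) mod 6" "(i+1) mod 6 = (i mod 6 + 1) mod 6" by presburger+
  then show ?thesis by (cases rule: nb_cases[of i v]) (auto simp: nb_def dir_def Let_def)
qed

lemma nb_neq: "nb v i \<noteq> v"
  by (cases rule: nb_cases[of i v]) (auto simp: prod_eq_iff)

lemma adj_nb: "adj v (nb v i)"
  unfolding adj_def by (rule exI[of _ "i mod 6"]) (simp add: nb_mod)

lemma adj_sym: "adj u w \<Longrightarrow> adj w u"
  unfolding adj_def using nb_back
  by (metis adj_def adj_nb)

lemma adj_consec: "adj (nb v i) (nb v (i+1))"
  by (metis adj_nb nb_consec)

lemma adj_irrefl: "\<not> adj v v"
  unfolding adj_def using nb_neq by metis

definition f_of :: "point \<Rightarrow> int" where "f_of p = 2 * fst p + snd p"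

lemma adj_cases:
  assumes "adj x y"
  shows "y = (fst x + 1, snd x) \<or> y = (fst x + 1, snd x - 1) \<or> y = (fst x, snd x - 1) \<or>
         y = (fst x - 1, snd x) \<or> y = (fst x - 1, snd x + 1) \<or> y = (fst x, snd x + 1)"
proof -
  obtain i where "y = nb x i" using assms adj_def by blast
  then show ?thesis by (cases rule: nb_cases[of i x]) auto
qed


abbreviation E :: "point set \<Rightarrow> (point \<times> point) set" where "E A \<equiv> induced_edges A"

definition comp :: "point set \<Rightarrow> point \<Rightarrow> point set" where
  "comp A p = {q. (p, q) \<in> (E A)\<^sup>*}"

definition sc :: "point set \<Rightarrow> bool" where
  "sc S \<longleftrightarrow> (\<forall>p. p \<notin> S \<longrightarrow> outer_face S p)"

lemma E_iff: "(x,y) \<in> E A \<longleftrightarrow> x \<in> A \<and> y \<in> A \<and> adj x y"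
  by (simp add: induced_edges_def)

lemma E_sym: "(x,y) \<in> E A \<Longrightarrow> (y,x) \<in> E A"
  by (auto simp: E_iff adj_sym)

lemma rt_sym: "(x,y) \<in> (E A)\<^sup>* \<Longrightarrow> (y,x) \<in> (E A)\<^sup>*"
proof (induction rule: rtrancl_induct)
  case base then show ?case by simp
next
  case (step y z) then show ?case by (meson E_sym converse_rtrancl_into_rtrancl)
qed

lemma E_mono: "A \<subseteq> B \<Longrightarrow> E A \<subseteq> E B"
  unfolding induced_edges_def by blast

lemma rt_mono: "A \<subseteq> B \<Longrightarrow> (x,y) \<in> (E A)\<^sup>* \<Longrightarrow> (x,y) \<in> (E B)\<^sup>*"
  by (rule rtrancl_mono[OF E_mono, THEN subsetD])

lemma rt_in: "(x,y) \<in> (E A)\<^sup>* \<Longrightarrow> x \<in> A \<Longrightarrow> y \<in> A"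
  by (induction rule: rtrancl_induct) (simp_all add: E_iff)

lemma rt_edge: "x \<in> A \<Longrightarrow> y \<in> A \<Longrightarrow> adj x y \<Longrightarrow> (x,y) \<in> (E A)\<^sup>*"
  by (simp add: E_iff r_into_rtrancl)

lemma rt_within: "(x,y) \<in> (E A)\<^sup>* \<Longrightarrow> (x,y) \<in> (E (comp A x))\<^sup>*"
proof (induction rule: rtrancl_induct)
  case base then show ?case by simp
next
  case (step y z)
  have "y \<in> comp A x" "z \<in> comp A x" using step by (auto simp: comp_def)
  then have "(y,z) \<in> E (comp A x)" using step(2) by (auto simp: E_iff)
  then show ?case using step(3) by simp
qed

lemma comp_eq: "(p,q) \<in> (E A)\<^sup>* \<Longrightarrow> comp A q = comp A p"
  unfolding comp_def using rt_sym by (meson rtrancl_trans)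

lemma comp_mono: "A \<subseteq> B \<Longrightarrow> comp A p \<subseteq> comp B p"
  unfolding comp_def using rt_mono by blast

lemma outer_face_comp: "outer_face S p \<longleftrightarrow> p \<notin> S \<and> infinite (comp (- S) p)"
  by (simp add: outer_face_def comp_def)

lemma outer_mono:
  assumes "S' \<subseteq> S" "outer_face S p" shows "outer_face S' p"
proof -
  have "comp (- S) p \<subseteq> comp (- S') p" using assms(1) by (intro comp_mono) auto
  then show ?thesis using assms by (auto simp: outer_face_comp dest: finite_subset)
qed

lemma outer_via:
  assumes "S' \<subseteq> S" "outer_face S q" "p \<notin> S'" "(p,q) \<in> (E (- S'))\<^sup>*"
  shows "outer_face S' p"
proof -
  have "comp (- S) q \<subseteq> comp (- S') q" using assms(1) by (intro comp_mono) auto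
  also have "comp (- S') q = comp (- S') p" using assms(4) by (rule comp_eq)
  finally show ?thesis using assms by (auto simp: outer_face_comp dest: finite_subset)
qed

lemma connected_nb:
  assumes "connected_pts S" "v \<in> S" "w \<in> S" "w \<noteq> v"
  shows "\<exists>i<6. nb v i \<in> S"
proof -
  have "(v,w) \<in> (E S)\<^sup>*" using assms connected_pts_def by blast
  then obtain z where "(v,z) \<in> E S" using assms(4) by (metis converse_rtranclE)
  then show ?thesis by (auto simp: E_iff adj_def)
qed

lemma connected_single:
  assumes "connected_pts S" "v \<in> S" "\<forall>i<6. nb v i \<notin> S"
  shows "S = {v}"
proof (intro set_eqI iffI)
  fix w assume w: "w \<in> S"
  show "w \<in> {v}"
  proof (rule ccontr)
    assume "w \<notin> {v}"
    then show False using connected_nb[OF assms(1,2) w] assms(3) by auto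
  qed
qed (use assms in auto)

lemma reroute:
  assumes "(z,t) \<in> (E S)\<^sup>*" "z \<in> S - {v}"
  shows "(\<exists>n. n \<in> S - {v} \<and> adj v n \<and> (z,n) \<in> (E (S - {v}))\<^sup>*) \<or> (t \<in> S - {v} \<and> (z,t) \<in> (E (S - {v}))\<^sup>*)"
  using assms(1)
proof (induction rule: rtrancl_induct)
  case base then show ?case using assms(2) by simp
next
  case (step t t')
  from step(3) show ?case
  proof
    assume "\<exists>n. n \<in> S - {v} \<and> adj v n \<and> (z, n) \<in> (E (S - {v}))\<^sup>*"
    then show ?thesis by blast
  next
    assume h: "t \<in> S - {v} \<and> (z, t) \<in> (E (S - {v}))\<^sup>*"
    show ?thesis
    proof (cases "t' = v")
      case True
      then have "adj v t" using step(2) by (auto simp: E_iff adj_sym)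
      then show ?thesis using h by blast
    next
      case False
      then have "(t,t') \<in> E (S - {v})" using h step(2) by (auto simp: E_iff)
      then have "(z,t') \<in> (E (S - {v}))\<^sup>*" using h by (meson rtrancl.rtrancl_into_rtrancl)
      then show ?thesis using False step(2) by (simp add: E_iff)
    qed
  qed
qed

definition nbset :: "point set \<Rightarrow> point \<Rightarrow> point set" where
  "nbset S v = {nb v i | i. i < 6 \<and> nb v i \<in> S}"

lemma nbset_adj: "n \<in> S \<Longrightarrow> adj v n \<Longrightarrow> n \<in> nbset S v"
  by (auto simp: nbset_def adj_def)

lemma connected_remove:
  assumes "connected_pts S" "v \<in> S" "connected_pts (nbset S v)"
  shows "connected_pts (S - {v})"
  unfolding connected_pts_def
proof (intro ballI)
  fix x y assume x: "x \<in> S - {v}" and y: "y \<in> S - {v}"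
  have sub: "nbset S v \<subseteq> S - {v}"
  proof
    fix n assume "n \<in> nbset S v"
    then obtain i where "n = nb v i" "nb v i \<in> S" by (auto simp: nbset_def)
    then show "n \<in> S - {v}" using nb_neq[of v i] by simp
  qed
  have xy: "(x,y) \<in> (E S)\<^sup>*" "(y,x) \<in> (E S)\<^sup>*" using assms(1) x y by (auto simp: connected_pts_def)
  from reroute[OF xy(1) x] show "(x,y) \<in> (E (S - {v}))\<^sup>*"
  proof
    assume "\<exists>n. n \<in> S - {v} \<and> adj v n \<and> (x, n) \<in> (E (S - {v}))\<^sup>*"
    then obtain n1 where n1: "n1 \<in> S - {v}" "adj v n1" "(x, n1) \<in> (E (S - {v}))\<^sup>*" by blast
    from reroute[OF xy(2) y] show ?thesis
    proof
      assume "\<exists>n. n \<in> S - {v} \<and> adj v n \<and> (y, n) \<in> (E (S - {v}))\<^sup>*"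
      then obtain n2 where n2: "n2 \<in> S - {v}" "adj v n2" "(y, n2) \<in> (E (S - {v}))\<^sup>*" by blast
      have "n1 \<in> nbset S v" "n2 \<in> nbset S v" using n1 n2 by (auto intro: nbset_adj)
      then have "(n1,n2) \<in> (E (nbset S v))\<^sup>*" using assms(3) connected_pts_def by blast
      then have "(n1,n2) \<in> (E (S - {v}))\<^sup>*" using rt_mono[OF sub] by blast
      then show ?thesis using n1 n2 rt_sym by (meson rtrancl_trans)
    next
      assume "x \<in> S - {v} \<and> (y, x) \<in> (E (S - {v}))\<^sup>*"
      then show ?thesis using rt_sym by blast
    qed
  qed simp
qed

definition ray :: "point \<Rightarrow> nat \<Rightarrow> nat \<Rightarrow> point" where
  "ray p i k = (fst p + int k * fst (dir i), snd p + int k * snd (dir i))"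

lemma ray_Suc: "ray p i (Suc k) = nb (ray p i k) i"
  by (simp add: ray_def nb_def algebra_simps)

lemma dir_nz: "dir i \<noteq> (0,0)"
  by (simp add: dir_def Let_def)

lemma ray_inj: "inj (ray p i)"
proof (rule injI)
  fix k l assume h: "ray p i k = ray p i l"
  then have "int k * fst (dir i) = int l * fst (dir i)" "int k * snd (dir i) = int l * snd (dir i)"
    by (auto simp: ray_def)
  moreover have "fst (dir i) \<noteq> 0 \<or> snd (dir i) \<noteq> 0" using dir_nz[of i] by (metis prod.collapse)
  ultimately show "k = l" by auto
qed

lemma ray_outer:
  assumes "\<forall>k. ray p i k \<notin> S"
  shows "outer_face S p"
proof -
  have p: "p \<notin> S" using assms[rule_format, of 0] by (simp add: ray_def)
  have "(p, ray p i k) \<in> (E (- S))\<^sup>*" for k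
  proof (induction k)
    case 0 then show ?case by (simp add: ray_def)
  next
    case (Suc k)
    have "(ray p i k, ray p i (Suc k)) \<in> E (- S)"
      using assms[rule_format, of k] assms[rule_format, of "Suc k"] by (simp add: E_iff ray_Suc adj_nb)
    then show ?case using Suc by simp
  qed
  then have "range (ray p i) \<subseteq> comp (- S) p" by (auto simp: comp_def)
  moreover have "infinite (range (ray p i))" using ray_inj finite_imageD by blast
  ultimately show ?thesis using p by (auto simp: outer_face_comp dest: finite_subset)
qed


lemma less6: "(r::nat) < 6 \<Longrightarrow> r = 0 \<or> r = 1 \<or> r = 2 \<or> r = 3 \<or> r = 4 \<or> r = 5"
  by linarith

lemma t1: "(i::nat) mod 6 = r \<Longrightarrow> x < 6 \<Longrightarrow> (i + (x + 6 - r) mod 6) mod 6 = x"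
proof -
  assume a: "i mod 6 = r" "x < 6"
  have r: "r < 6" using a(1) by auto
  have "(i + (x + 6 - r) mod 6) mod 6 = (r + (x + 6 - r) mod 6) mod 6"
    using a(1) by (metis mod_add_left_eq)
  also have "\<dots> = x" using r a(2)
    using less6[OF r] less6[OF a(2)] by (elim disjE) simp_all
  finally show ?thesis .
qed

lemma t2: "(i::nat) mod 6 = r \<Longrightarrow> j < 6 \<Longrightarrow> ((i + j) mod 6 + 6 - r) mod 6 = j"
proof -
  assume a: "i mod 6 = r" "j < 6"
  have r: "r < 6" using a(1) by auto
  have "(i + j) mod 6 = (r + j) mod 6" using a(1) by (metis mod_add_left_eq)
  moreover have "((r + j) mod 6 + 6 - r) mod 6 = j" using r a(2)
    using less6[OF r] less6[OF a(2)] by (elim disjE) simp_all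
  ultimately show ?thesis by simp
qed

lemma cyc_int_image: "cyc_int i k = (\<lambda>j. (i+j) mod 6) ` {..<k}"
  by (auto simp: cyc_int_def)

lemma card_cyc_int_le: "card (cyc_int i k) \<le> k"
  unfolding cyc_int_image by (metis card_image_le card_lessThan finite_lessThan)

lemma card_cyc_int: "k \<le> 6 \<Longrightarrow> card (cyc_int i k) = k"
proof -
  assume k: "k \<le> 6"
  have "inj_on (\<lambda>j. (i + j) mod 6) {..<k}"
  proof (rule inj_onI)
    fix x y assume xy: "x \<in> {..<k}" "y \<in> {..<k}" "(i + x) mod 6 = (i + y) mod 6"
    have "x = ((i + x) mod 6 + 6 - i mod 6) mod 6" using t2[of i "i mod 6" x] xy(1) k by simp
    also have "\<dots> = ((i + y) mod 6 + 6 - i mod 6) mod 6" using xy(3) by simp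
    also have "\<dots> = y" using t2[of i "i mod 6" y] xy(2) k by simp
    finally show "x = y" .
  qed
  then show ?thesis unfolding cyc_int_image by (simp add: card_image)
qed

lemma cyc_int_mem: "j < k \<Longrightarrow> (i + j) mod 6 \<in> cyc_int i k"
  by (auto simp: cyc_int_def)

lemma cyc_mem: "k \<le> 6 \<Longrightarrow> x \<in> cyc_int i k \<longleftrightarrow> x < 6 \<and> (x + 6 - i mod 6) mod 6 < k"
proof
  assume k: "k \<le> 6" and "x \<in> cyc_int i k"
  then obtain j where j: "x = (i + j) mod 6" "j < k" by (auto simp: cyc_int_def)
  have "(x + 6 - i mod 6) mod 6 = j" using t2[of i "i mod 6" j] j k by simp
  then show "x < 6 \<and> (x + 6 - i mod 6) mod 6 < k" using j by simp
next
  assume k: "k \<le> 6" and h: "x < 6 \<and> (x + 6 - i mod 6) mod 6 < k"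
  have "(i + (x + 6 - i mod 6) mod 6) mod 6 = x" using t1[of i "i mod 6" x] h by simp
  then show "x \<in> cyc_int i k" using h unfolding cyc_int_def by (metis (mono_tags, lifting) mem_Collect_eq)
qed

lemma compl_brute: "(r::nat) < 6 \<Longrightarrow> j < 6 \<Longrightarrow> k \<le> 6 \<Longrightarrow>
   (\<not> (j + 6 - r) mod 6 < k) = ((j + 6 - (r + k) mod 6) mod 6 < 6 - k)"
proof -
  assume r: "r < 6" and j: "j < 6" and "k \<le> 6"
  then have k: "k = 0 \<or> k = 1 \<or> k = 2 \<or> k = 3 \<or> k = 4 \<or> k = 5 \<or> k = 6" by linarith
  show ?thesis using less6[OF r] less6[OF j] k by (elim disjE) simp_all
qed

lemma compl_arc:
  assumes "k \<le> 6"
  shows "{j. j < 6 \<and> j \<notin> cyc_int i k} = cyc_int ((i+k) mod 6) (6-k)"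
proof -
  have lt: "x \<in> cyc_int a b \<Longrightarrow> x < 6" for x a b by (auto simp: cyc_int_def)
  have main: "j \<notin> cyc_int i k \<longleftrightarrow> j \<in> cyc_int ((i+k) mod 6) (6-k)" if j: "j < 6" for j
  proof -
    have e: "(i + k) mod 6 mod 6 = (i mod 6 + k) mod 6" by (simp add: mod_add_left_eq)
    have "6 - k \<le> 6" by simp
    show ?thesis using assms j compl_brute[of "i mod 6" j k] unfolding cyc_mem[OF assms] cyc_mem[OF \<open>6 - k \<le> 6\<close>] e
      by simp
  qed
  show ?thesis
  proof (intro set_eqI iffI)
    fix x assume "x \<in> {j. j < 6 \<and> j \<notin> cyc_int i k}"
    then show "x \<in> cyc_int ((i + k) mod 6) (6 - k)" using main by blast
  next
    fix x assume x: "x \<in> cyc_int ((i + k) mod 6) (6 - k)"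
    then have "x < 6" by (rule lt)
    then show "x \<in> {j. j < 6 \<and> j \<notin> cyc_int i k}" using main x by blast
  qed
qed

definition good :: "point set \<Rightarrow> point \<Rightarrow> bool" where
  "good S u \<longleftrightarrow> u \<in> S \<and> (\<exists>i<6. \<exists>k. 1 \<le> k \<and> k \<le> 3 \<and> {j. j < 6 \<and> nb u j \<in> S} = cyc_int i k)"

lemma conn_arc: "connected_pts {nb u (i + j) | j. j < k}"
proof -
  let ?A = "{nb u (i + j) | j. j < k}"
  have "(nb u i, nb u (i + j)) \<in> (E ?A)\<^sup>*" if "j < k" for j
    using that
  proof (induction j)
    case 0 then show ?case by simp
  next
    case (Suc j)
    have m1: "nb u (i + Suc j) \<in> ?A" using Suc(2) by blast
    have m2: "nb u (i + j) \<in> ?A" using Suc(2) by (metis (mono_tags, lifting) Suc_lessD mem_Collect_eq)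
    have "(nb u (i + j), nb u (i + Suc j)) \<in> E ?A"
      using m1 m2 adj_consec[of u "i + j"] by (simp add: E_iff)
    then show ?case using Suc by (meson Suc_lessD rtrancl.rtrancl_into_rtrancl)
  qed
  then have "\<forall>x \<in> ?A. (nb u i, x) \<in> (E ?A)\<^sup>*" by auto
  then show ?thesis unfolding connected_pts_def using rt_sym by (meson rtrancl_trans)
qed

lemma nbset_arc:
  assumes "{j. j < 6 \<and> nb u j \<in> S} = cyc_int i k"
  shows "nbset S u = {nb u (i + j) | j. j < k}"
proof -
  have "nbset S u = nb u ` {j. j < 6 \<and> nb u j \<in> S}" by (auto simp: nbset_def)
  also have "\<dots> = nb u ` cyc_int i k" using assms by simp
  also have "\<dots> = (\<lambda>j. nb u (i + j)) ` {..<k}" unfolding cyc_int_image image_image nb_mod ..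
  also have "\<dots> = {nb u (i + j) | j. j < k}" by auto
  finally show ?thesis .
qed

lemma good_SCE:
  assumes g: "good S u" and s: "sc S"
  shows "SCE S u"
proof -
  obtain i k where ik: "u \<in> S" "i < 6" "1 \<le> k" "k \<le> 3" "{j. j < 6 \<and> nb u j \<in> S} = cyc_int i k"
    using g by (auto simp: good_def)
  define Od where "Od = cyc_int ((i+k) mod 6) (6-k)"
  have od: "out_dirs S u = Od"
  proof -
    have "out_dirs S u = {j. j < 6 \<and> j \<notin> cyc_int i k}" using ik(5) by (auto simp: out_dirs_def)
    then show ?thesis using compl_arc[of k i] ik by (simp add: Od_def)
  qed
  have cO: "card Od = 6 - k" unfolding Od_def by (rule card_cyc_int) simp
  have j0: "(i + k) mod 6 \<in> Od" unfolding Od_def using cyc_int_mem[of 0 "6-k" "(i+k) mod 6"] ik by simp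
  then have nj0: "nb u ((i + k) mod 6) \<notin> S" using od by (auto simp: out_dirs_def)
  have lt: "(i + k) mod 6 < 6" by simp
  have bp: "boundary_point S u" using ik(1) nj0 lt unfolding boundary_point_def by blast
  have "outer_face S (nb u ((i + k) mod 6))" using nj0 s unfolding sc_def by blast
  then have ob: "u \<in> outer_boundary S" using ik(1) lt unfolding outer_boundary_def by blast
  have red: "redundant S u"
    using bp conn_arc nbset_arc[OF ik(5)] by (simp add: redundant_def nbset_def[symmetric])
  have k1: "1 \<le> 6 - k" "6 - k \<le> 6" using ik by auto
  have ic: "is_cyc_int Od" unfolding is_cyc_int_def Od_def using lt k1 by blast
  have lb: "local_boundary S u Od" using bp ic od by (auto simp: local_boundary_def)
  have "bcount Od > 0" using cO ik by (simp add: bcount_def)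
  then show ?thesis using lb red ob by (auto simp: SCE_def erodable_def)
qed

lemma SCE_three:
  assumes "SCE S v"
  shows "\<exists>i. nb v i \<notin> S \<and> nb v (i+1) \<notin> S \<and> nb v (i+2) \<notin> S"
proof -
  obtain B where B: "local_boundary S v B" "bcount B > 0" using assms by (auto simp: SCE_def)
  then obtain i k where ik: "B = cyc_int i k" "B \<subseteq> out_dirs S v" by (auto simp: local_boundary_def is_cyc_int_def)
  have "card B \<ge> 3" using B(2) by (simp add: bcount_def)
  then have "k \<ge> 3" using card_cyc_int_le[of i k] ik by simp
  then have "(i+0) mod 6 \<in> B" "(i+1) mod 6 \<in> B" "(i+2) mod 6 \<in> B"
    using ik(1) cyc_int_mem[of 0 k i] cyc_int_mem[of 1 k i] cyc_int_mem[of 2 k i] by auto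
  then have "nb v (i mod 6) \<notin> S" "nb v ((i+1) mod 6) \<notin> S" "nb v ((i+2) mod 6) \<notin> S"
    using ik(2) by (auto simp: out_dirs_def)
  then show ?thesis by (auto simp: nb_mod)
qed


fun crg :: "(point \<Rightarrow> point \<Rightarrow> bool) \<Rightarrow> point list \<Rightarrow> nat" where
  "crg R (x # y # ys) = (if R x y then 1 else 0) + crg R (y # ys)"
| "crg R _ = 0"

definition crosses :: "point \<Rightarrow> point \<Rightarrow> point \<Rightarrow> bool" where
  "crosses q x y \<longleftrightarrow> (snd x = snd q \<and> fst x > fst q \<and> snd y = snd q + 1) \<or>
                      (snd y = snd q \<and> fst y > fst q \<and> snd x = snd q + 1)"

definition crossesL :: "point \<Rightarrow> point \<Rightarrow> point \<Rightarrow> bool" where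
  "crossesL q x y \<longleftrightarrow> (snd x = snd q \<and> fst x < fst q \<and> snd y = snd q + 1) \<or>
                      (snd y = snd q \<and> fst y < fst q \<and> snd x = snd q + 1)"

definition cut :: "point set \<Rightarrow> point \<Rightarrow> point \<Rightarrow> bool" where
  "cut D x y \<longleftrightarrow> (x \<in> D) \<noteq> (y \<in> D)"

lemma crg_Cons: "xs \<noteq> [] \<Longrightarrow> crg R (x # xs) = (if R x (hd xs) then 1 else 0) + crg R xs"
  by (cases xs) auto

lemma crg_xor:
  assumes "successively adj xs" "\<forall>x\<in>set xs. Q x"
    "\<And>x y. adj x y \<Longrightarrow> Q x \<Longrightarrow> Q y \<Longrightarrow> (R3 x y \<longleftrightarrow> (R1 x y \<noteq> R2 x y))"
  shows "even (crg R1 xs + crg R2 xs + crg R3 xs)"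
  using assms(1,2)
proof (induction xs)
  case Nil then show ?case by simp
next
  case (Cons x xs)
  show ?case
  proof (cases xs)
    case Nil then show ?thesis by simp
  next
    case (Cons y ys)
    have ih: "even (crg R1 xs + crg R2 xs + crg R3 xs)" using Cons.IH Cons.prems \<open>xs = y # ys\<close> by simp
    have "R3 x y \<longleftrightarrow> (R1 x y \<noteq> R2 x y)" using Cons.prems \<open>xs = y # ys\<close> assms(3) by simp
    then show ?thesis using ih \<open>xs = y # ys\<close> by auto
  qed
qed

lemma cut_parity: "xs \<noteq> [] \<Longrightarrow> even (crg (cut D) xs) \<longleftrightarrow> ((hd xs \<in> D) = (last xs \<in> D))"
proof (induction "cut D" xs rule: crg.induct)
  case (1 x y ys) then show ?case by (auto simp: cut_def)
qed auto

lemma cut_even: "xs \<noteq> [] \<Longrightarrow> hd xs = last xs \<Longrightarrow> even (crg (cut D) xs)"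
  using cut_parity by simp

lemma crg_zero: "(\<And>x y. x \<in> set xs \<Longrightarrow> y \<in> set xs \<Longrightarrow> \<not> R x y) \<Longrightarrow> crg R xs = 0"
  by (induction R xs rule: crg.induct) auto

lemma crg_snoc: "xs \<noteq> [] \<Longrightarrow> crg R (xs @ [y]) = crg R xs + (if R (last xs) y then 1 else 0)"
  by (induction R xs rule: crg.induct) auto

lemma edge0:
  assumes "adj x y" "q' = (fst q + 1, snd q)" "x \<noteq> q'" "y \<noteq> q'"
  shows "cut {} x y \<longleftrightarrow> (crosses q x y \<noteq> crosses q' x y)"
proof -
  obtain c d a b where xq: "x = (c,d)" "q = (a,b)" by (cases x; cases q)
  show ?thesis using adj_cases[OF assms(1)] assms(2-4) unfolding xq
    by (elim disjE) (simp_all add: cut_def crosses_def prod_eq_iff; presburger)+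
qed

lemma edge5:
  assumes "adj x y" "q' = (fst q, snd q + 1)" "x \<noteq> q" "y \<noteq> q" "x \<noteq> q'" "y \<noteq> q'"
  shows "cut {p. snd p = snd q + 1 \<and> fst p \<ge> fst q} x y \<longleftrightarrow> (crosses q x y \<noteq> crosses q' x y)"
proof -
  obtain c d a b where xq: "x = (c,d)" "q = (a,b)" by (cases x; cases q)
  show ?thesis using adj_cases[OF assms(1)] assms(2-6) unfolding xq
    by (elim disjE) (simp_all add: cut_def crosses_def prod_eq_iff; presburger)+
qed

lemma edge4:
  assumes "adj x y" "q' = (fst q - 1, snd q + 1)" "x \<noteq> q" "y \<noteq> q" "x \<noteq> q'" "y \<noteq> q'"
  shows "cut {p. snd p = snd q + 1 \<and> fst p \<ge> fst q - 1} x y \<longleftrightarrow> (crosses q x y \<noteq> crosses q' x y)"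
proof -
  obtain c d a b where xq: "x = (c,d)" "q = (a,b)" by (cases x; cases q)
  show ?thesis using adj_cases[OF assms(1)] assms(2-6) unfolding xq
    by (elim disjE) (simp_all add: cut_def crosses_def prod_eq_iff; presburger)+
qed

lemma edgeL:
  assumes "adj x y" "x \<noteq> q" "y \<noteq> q"
  shows "cut {p. snd p \<le> snd q} x y \<longleftrightarrow> (crosses q x y \<noteq> crossesL q x y)"
proof -
  obtain c d a b where xq: "x = (c,d)" "q = (a,b)" by (cases x; cases q)
  show ?thesis using adj_cases[OF assms(1)] assms(2-3) unfolding xq
    by (elim disjE) (simp_all add: cut_def crosses_def crossesL_def prod_eq_iff; presburger)+
qed

definition closed_walk :: "point list \<Rightarrow> bool" where
  "closed_walk xs \<longleftrightarrow> xs \<noteq> [] \<and> hd xs = last xs \<and> successively adj xs"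

lemma transfer_basic:
  assumes cw: "closed_walk xs" and nq: "q \<notin> set xs" "q' \<notin> set xs"
    and d: "q' = (fst q + 1, snd q) \<or> q' = (fst q - 1, snd q + 1) \<or> q' = (fst q, snd q + 1)"
  shows "even (crg (crosses q) xs + crg (crosses q') xs)"
proof -
  have sa: "successively adj xs" and ne: "xs \<noteq> []" "hd xs = last xs" using cw by (auto simp: closed_walk_def)
  let ?Q = "\<lambda>x. x \<noteq> q \<and> x \<noteq> q'"
  have Q: "\<forall>x\<in>set xs. ?Q x" using nq by auto
  from d show ?thesis
  proof (elim disjE)
    assume h: "q' = (fst q + 1, snd q)"
    have "even (crg (crosses q) xs + crg (crosses q') xs + crg (cut {}) xs)"
      by (rule crg_xor[OF sa Q]) (use edge0[OF _ h] in blast)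
    then show ?thesis using cut_even[OF ne, of "{}"] by simp
  next
    assume h: "q' = (fst q - 1, snd q + 1)"
    let ?D = "{p. snd p = snd q + 1 \<and> fst p \<ge> fst q - 1}"
    have "even (crg (crosses q) xs + crg (crosses q') xs + crg (cut ?D) xs)"
      by (rule crg_xor[OF sa Q]) (use edge4[OF _ h] in blast)
    then show ?thesis using cut_even[OF ne, of ?D] by simp
  next
    assume h: "q' = (fst q, snd q + 1)"
    let ?D = "{p. snd p = snd q + 1 \<and> fst p \<ge> fst q}"
    have "even (crg (crosses q) xs + crg (crosses q') xs + crg (cut ?D) xs)"
      by (rule crg_xor[OF sa Q]) (use edge5[OF _ h] in blast)
    then show ?thesis using cut_even[OF ne, of ?D] by simp
  qed
qed

lemma transfer:
  assumes cw: "closed_walk xs" and nq: "q \<notin> set xs" "q' \<notin> set xs" and a: "adj q q'"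
  shows "even (crg (crosses q) xs + crg (crosses q') xs)"
proof -
  from adj_cases[OF a] show ?thesis
  proof (elim disjE)
    assume "q' = (fst q + 1, snd q)" then show ?thesis using transfer_basic[OF cw nq] by blast
  next
    assume "q' = (fst q - 1, snd q + 1)" then show ?thesis using transfer_basic[OF cw nq] by blast
  next
    assume "q' = (fst q, snd q + 1)" then show ?thesis using transfer_basic[OF cw nq] by blast
  next
    assume "q' = (fst q + 1, snd q - 1)"
    then have "q = (fst q' - 1, snd q' + 1)" by auto
    then show ?thesis using transfer_basic[OF cw nq(2,1)] by (simp add: add.commute)
  next
    assume "q' = (fst q, snd q - 1)"
    then have "q = (fst q', snd q' + 1)" by auto
    then show ?thesis using transfer_basic[OF cw nq(2,1)] by (simp add: add.commute)
  next
    assume "q' = (fst q - 1, snd q)"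
    then have "q = (fst q' + 1, snd q')" by auto
    then show ?thesis using transfer_basic[OF cw nq(2,1)] by (simp add: add.commute)
  qed
qed

lemma LR:
  assumes cw: "closed_walk xs" and nq: "q \<notin> set xs"
  shows "even (crg (crosses q) xs + crg (crossesL q) xs)"
proof -
  have sa: "successively adj xs" and ne: "xs \<noteq> []" "hd xs = last xs" using cw by (auto simp: closed_walk_def)
  have Q: "\<forall>x\<in>set xs. x \<noteq> q" using nq by auto
  let ?D = "{p. snd p \<le> snd q}"
  have "even (crg (crosses q) xs + crg (crossesL q) xs + crg (cut ?D) xs)"
    by (rule crg_xor[OF sa Q]) (use edgeL in blast)
  then show ?thesis using cut_even[OF ne, of ?D] by simp
qed

lemma odd_box:
  assumes cw: "closed_walk xs" and nq: "p \<notin> set xs" and o: "odd (crg (crosses p) xs)"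
  shows "(\<exists>x\<in>set xs. snd x = snd p) \<and> (\<exists>x\<in>set xs. fst p < fst x) \<and> (\<exists>x\<in>set xs. fst x \<le> fst p)"
proof (intro conjI)
  show "\<exists>x\<in>set xs. snd x = snd p"
  proof (rule ccontr)
    assume "\<not> ?thesis"
    then have "crg (crosses p) xs = 0" by (intro crg_zero) (auto simp: crosses_def)
    then show False using o by simp
  qed
  show "\<exists>x\<in>set xs. fst p < fst x"
  proof (rule ccontr)
    assume "\<not> ?thesis"
    then have "crg (crosses p) xs = 0" by (intro crg_zero) (auto simp: crosses_def)
    then show False using o by simp
  qed
  show "\<exists>x\<in>set xs. fst x \<le> fst p"
  proof (rule ccontr)
    assume h: "\<not> ?thesis"
    have "crg (crossesL p) xs = 0" using h by (intro crg_zero) (auto simp: crossesL_def)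
    then show False using LR[OF cw nq] o by simp
  qed
qed

lemma box_finite: "finite {p :: point. (\<exists>x\<in>set xs. snd x = snd p) \<and> (\<exists>x\<in>set xs. fst p < fst x) \<and> (\<exists>x\<in>set xs. fst x \<le> fst p)}"
proof -
  let ?A = "fst ` set xs" and ?B = "snd ` set xs"
  have "{p :: point. (\<exists>x\<in>set xs. snd x = snd p) \<and> (\<exists>x\<in>set xs. fst p < fst x) \<and> (\<exists>x\<in>set xs. fst x \<le> fst p)}
        \<subseteq> {Min ?A .. Max ?A} \<times> ?B"
  proof
    fix p :: point assume h: "p \<in> {p. (\<exists>x\<in>set xs. snd x = snd p) \<and> (\<exists>x\<in>set xs. fst p < fst x) \<and> (\<exists>x\<in>set xs. fst x \<le> fst p)}"
    then obtain x1 x2 x3 where x: "x1 \<in> set xs" "snd x1 = snd p" "x2 \<in> set xs" "fst p < fst x2" "x3 \<in> set xs" "fst x3 \<le> fst p"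
      by blast
    have m1: "Min ?A \<le> fst x3" using x(5) by simp
    have m2: "fst x2 \<le> Max ?A" using x(3) by simp
    have "Min ?A \<le> fst p" using m1 x(6) by linarith
    moreover have "fst p \<le> Max ?A" using m2 x(4) by linarith
    ultimately have "fst p \<in> {Min ?A .. Max ?A}" by simp
    moreover have "snd p \<in> ?B" using x(1,2) by (metis image_eqI)
    ultimately show "p \<in> {Min ?A .. Max ?A} \<times> ?B" by (simp add: mem_Times_iff)
  qed
  then show ?thesis by (rule finite_subset) simp
qed

lemma J_lemma:
  assumes cw: "closed_walk xs" and sub: "set xs \<subseteq> S" and w: "w \<notin> S"
    and o: "odd (crg (crosses w) xs)"
  shows "\<not> outer_face S w"
proof -
  have "odd (crg (crosses p) xs)" if "(w,p) \<in> (E (- S))\<^sup>*" for p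
    using that
  proof (induction rule: rtrancl_induct)
    case base then show ?case using o .
  next
    case (step p p')
    then have "p \<notin> set xs" "p' \<notin> set xs" "adj p p'" using sub by (auto simp: E_iff)
    then have "even (crg (crosses p) xs + crg (crosses p') xs)" using transfer[OF cw] by blast
    then show ?case using step(3) by simp
  qed
  moreover have "p \<notin> set xs" if "(w,p) \<in> (E (- S))\<^sup>*" for p
    using rt_in[OF that] w sub by auto
  ultimately have "comp (- S) w \<subseteq> {p :: point. (\<exists>x\<in>set xs. snd x = snd p) \<and> (\<exists>x\<in>set xs. fst p < fst x) \<and> (\<exists>x\<in>set xs. fst x \<le> fst p)}"
    unfolding comp_def using odd_box[OF cw] by blast
  then have "finite (comp (- S) w)" using box_finite by (rule finite_subset)
  then show ?thesis by (simp add: outer_face_comp)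
qed


lemma walk_of_rt:
  assumes "(x,y) \<in> (E A)\<^sup>*" "x \<in> A"
  shows "\<exists>xs. xs \<noteq> [] \<and> hd xs = x \<and> last xs = y \<and> successively adj xs \<and> set xs \<subseteq> A"
  using assms(1)
proof (induction rule: rtrancl_induct)
  case base then show ?case using assms(2) by (intro exI[of _ "[x]"]) auto
next
  case (step y z)
  then obtain xs where xs: "xs \<noteq> []" "hd xs = x" "last xs = y" "successively adj xs" "set xs \<subseteq> A" by blast
  have "adj y z" "z \<in> A" using step(2) by (auto simp: E_iff)
  then show ?case using xs
    by (intro exI[of _ "xs @ [z]"]) (auto simp: successively_append_iff)
qed

lemma f_nb:
  "f_of (nb v 0) = f_of v + 2" "f_of (nb v 1) = f_of v + 1" "f_of (nb v 2) = f_of v - 1"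
  "f_of (nb v 3) = f_of v - 2" "f_of (nb v 4) = f_of v - 1" "f_of (nb v 5) = f_of v + 1"
  by (simp_all add: f_of_def nb_def dir_def)

lemma nb_coords:
  "nb v 0 = (fst v + 1, snd v)" "nb v 1 = (fst v + 1, snd v - 1)" "nb v 2 = (fst v, snd v - 1)"
  "nb v 3 = (fst v - 1, snd v)" "nb v 4 = (fst v - 1, snd v + 1)" "nb v 5 = (fst v, snd v + 1)"
  by (simp_all add: nb_def dir_def)

lemma nb_one: "nb v (Suc 0) = (fst v + 1, snd v - 1)"
  by (simp add: nb_def dir_def)

lemma cyc1: "cyc_int i (Suc 0) = {i mod 6}"
  by (auto simp: cyc_int_def)
lemma cyc2: "cyc_int i 2 = {i mod 6, (i+1) mod 6}"
proof -
  have "{..<2::nat} = {0,1}" by auto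
  then show ?thesis by (simp add: cyc_int_image)
qed
lemma cyc3: "cyc_int i 3 = {i mod 6, (i+1) mod 6, (i+2) mod 6}"
proof -
  have "{..<3::nat} = {0,1,2}" by auto
  then show ?thesis by (simp add: cyc_int_image)
qed

lemma good_intro:
  "u \<in> S \<Longrightarrow> {j. j < 6 \<and> nb u j \<in> S} = cyc_int i k \<Longrightarrow> i < 6 \<Longrightarrow> 1 \<le> k \<Longrightarrow> k \<le> 3 \<Longrightarrow> good S u"
  by (auto simp: good_def)

lemma nbdirs_three:
  assumes "\<forall>j<6. j \<notin> {a,b,c} \<longrightarrow> nb v j \<notin> S" "a < 6" "b < 6" "c < 6"
  shows "{j. j < 6 \<and> nb v j \<in> S} = {j. (j = a \<and> nb v a \<in> S) \<or> (j = b \<and> nb v b \<in> S) \<or> (j = c \<and> nb v c \<in> S)}"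
  using assms by auto

lemma closed_walk_loop:
  assumes "xs \<noteq> []" "successively adj xs" "adj v (hd xs)" "adj (last xs) v"
  shows "closed_walk (v # xs @ [v])"
  using assms by (auto simp: closed_walk_def successively_append_iff successively_Cons)

lemma crg_loop:
  assumes "xs \<noteq> []"
  shows "crg R (v # xs @ [v]) = (if R v (hd xs) then 1 else 0) + crg R xs + (if R (last xs) v then 1 else 0)"
  using assms by (simp add: crg_Cons crg_snoc)

lemma max_case:
  assumes con: "connected_pts S" and s: "sc S" and v: "v \<in> S"
    and mx: "\<forall>x\<in>S. f_of x \<le> f_of v" and two: "w0 \<in> S" "w0 \<noteq> v"
  shows "good S v \<or> (nb v 2 \<in> S \<and> nb v 4 \<in> S \<and> nb v 3 \<notin> S \<and> (\<forall>n\<in>S. adj v n \<longrightarrow> n = nb v 2 \<or> n = nb v 4)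
           \<and> (nb v 2, nb v 4) \<notin> (E (S - {v}))\<^sup>*)"
proof -
  have n015: "nb v 0 \<notin> S" "nb v 1 \<notin> S" "nb v 5 \<notin> S" using mx f_nb[of v] by force+
  have out: "\<forall>j<6. j \<notin> {2,3,4} \<longrightarrow> nb v j \<notin> S"
  proof (intro allI impI)
    fix j :: nat assume "j < 6" "j \<notin> {2,3,4}"
    then have "j = 0 \<or> j = 1 \<or> j = 5" by auto
    then show "nb v j \<notin> S" using n015 by auto
  qed
  have N: "{j. j < 6 \<and> nb v j \<in> S} = {j. (j = 2 \<and> nb v 2 \<in> S) \<or> (j = 3 \<and> nb v 3 \<in> S) \<or> (j = 4 \<and> nb v 4 \<in> S)}"
    by (rule nbdirs_three[OF out]) auto
  have ne: "nb v 2 \<in> S \<or> nb v 3 \<in> S \<or> nb v 4 \<in> S"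
  proof -
    obtain i where "i < 6" "nb v i \<in> S" using connected_nb[OF con v two] by blast
    then show ?thesis using out by blast
  qed
  show ?thesis
  proof (cases "nb v 2 \<in> S \<and> nb v 4 \<in> S \<and> nb v 3 \<notin> S")
    case False
    have "good S v"
    proof -
      consider (a) "nb v 2 \<in> S" "nb v 3 \<notin> S" "nb v 4 \<notin> S" | (b) "nb v 2 \<notin> S" "nb v 3 \<in> S" "nb v 4 \<notin> S"
        | (c) "nb v 2 \<notin> S" "nb v 3 \<notin> S" "nb v 4 \<in> S" | (d) "nb v 2 \<in> S" "nb v 3 \<in> S" "nb v 4 \<notin> S"
        | (e) "nb v 2 \<notin> S" "nb v 3 \<in> S" "nb v 4 \<in> S" | (f) "nb v 2 \<in> S" "nb v 3 \<in> S" "nb v 4 \<in> S"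
        using ne False by blast
      then show ?thesis
      proof cases
        case a then show ?thesis by (intro good_intro[OF v _, of 2 1]) (auto simp: N cyc1)
      next
        case b then show ?thesis by (intro good_intro[OF v _, of 3 1]) (auto simp: N cyc1)
      next
        case c then show ?thesis by (intro good_intro[OF v _, of 4 1]) (auto simp: N cyc1)
      next
        case d then show ?thesis by (intro good_intro[OF v _, of 2 2]) (auto simp: N cyc2)
      next
        case e then show ?thesis by (intro good_intro[OF v _, of 3 2]) (auto simp: N cyc2)
      next
        case f then show ?thesis by (intro good_intro[OF v _, of 2 3]) (auto simp: N cyc3)
      qed
    qed
    then show ?thesis by simp
  next
    case True
    let ?x2 = "nb v 2" and ?x4 = "nb v 4" and ?w = "nb v 3"
    have adjc: "\<forall>n\<in>S. adj v n \<longrightarrow> n = ?x2 \<or> n = ?x4"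
    proof (intro ballI impI)
      fix n assume n: "n \<in> S" "adj v n"
      then obtain i where i: "i < 6" "n = nb v i" by (auto simp: adj_def)
      then have "i \<in> {2,3,4}" using out n by blast
      then show "n = ?x2 \<or> n = ?x4" using True i n by auto
    qed
    have nc: "(?x2, ?x4) \<notin> (E (S - {v}))\<^sup>*"
    proof
      assume "(?x2, ?x4) \<in> (E (S - {v}))\<^sup>*"
      then have "(?x4, ?x2) \<in> (E (S - {v}))\<^sup>*" by (rule rt_sym)
      moreover have "?x4 \<in> S - {v}" using True nb_neq by auto
      ultimately obtain xs where xs: "xs \<noteq> []" "hd xs = ?x4" "last xs = ?x2" "successively adj xs" "set xs \<subseteq> S - {v}"
        using walk_of_rt by blast
      have cw: "closed_walk (v # xs @ [v])"
        using xs by (intro closed_walk_loop) (auto simp: adj_nb adj_sym)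
      have sub: "set (v # xs @ [v]) \<subseteq> S" using xs v by auto
      have c1: "crosses ?w v ?x4" by (simp add: crosses_def nb_coords)
      have c2: "\<not> crosses ?w ?x2 v" by (simp add: crosses_def nb_coords)
      have c3: "crg (crosses ?w) xs = 0"
      proof (rule crg_zero)
        fix x y assume xy: "x \<in> set xs" "y \<in> set xs"
        have noz: "\<not> (snd z = snd v \<and> fst z > fst v - 1)" if "z \<in> set xs" for z
        proof
          assume h: "snd z = snd v \<and> fst z > fst v - 1"
          have "z \<in> S" "z \<noteq> v" using that xs(5) by auto
          then have "f_of z \<le> f_of v" using mx by auto
          then have "fst z = fst v" using h by (simp add: f_of_def)
          then have "z = v" using h by (simp add: prod_eq_iff)
          then show False using \<open>z \<noteq> v\<close> by simp
        qed
        show "\<not> crosses ?w x y" using noz[OF xy(1)] noz[OF xy(2)] by (auto simp: crosses_def nb_coords)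
      qed
      have "odd (crg (crosses ?w) (v # xs @ [v]))"
        using crg_loop[OF xs(1), of "crosses ?w" v] xs c1 c2 c3 by simp
      then have "\<not> outer_face S ?w" using J_lemma[OF cw sub] True by blast
      then show False using s True unfolding sc_def by blast
    qed
    show ?thesis using True adjc nc by blast
  qed
qed

lemma min_case:
  assumes con: "connected_pts S" and s: "sc S" and v: "v \<in> S"
    and mn: "\<forall>x\<in>S. f_of v \<le> f_of x" and two: "w0 \<in> S" "w0 \<noteq> v"
  shows "good S v \<or> (nb v 5 \<in> S \<and> nb v 1 \<in> S \<and> nb v 0 \<notin> S \<and> (\<forall>n\<in>S. adj v n \<longrightarrow> n = nb v 5 \<or> n = nb v 1)
           \<and> (nb v 5, nb v 1) \<notin> (E (S - {v}))\<^sup>*)"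
proof -
  have n234: "nb v 2 \<notin> S" "nb v 3 \<notin> S" "nb v 4 \<notin> S" using mn f_nb[of v] by force+
  have out: "\<forall>j<6. j \<notin> {5,0,1} \<longrightarrow> nb v j \<notin> S"
  proof (intro allI impI)
    fix j :: nat assume "j < 6" "j \<notin> {5,0,1}"
    then have "j = 2 \<or> j = 3 \<or> j = 4" by auto
    then show "nb v j \<notin> S" using n234 by auto
  qed
  have N: "{j. j < 6 \<and> nb v j \<in> S} = {j. (j = 5 \<and> nb v 5 \<in> S) \<or> (j = 0 \<and> nb v 0 \<in> S) \<or> (j = 1 \<and> nb v 1 \<in> S)}"
    by (rule nbdirs_three[OF out]) auto
  have ne: "nb v 5 \<in> S \<or> nb v 0 \<in> S \<or> nb v 1 \<in> S"
  proof -
    obtain i where "i < 6" "nb v i \<in> S" using connected_nb[OF con v two] by blast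
    then show ?thesis using out by blast
  qed
  show ?thesis
  proof (cases "nb v 5 \<in> S \<and> nb v 1 \<in> S \<and> nb v 0 \<notin> S")
    case False
    have "good S v"
    proof -
      consider (a) "nb v 5 \<in> S" "nb v 0 \<notin> S" "nb v 1 \<notin> S" | (b) "nb v 5 \<notin> S" "nb v 0 \<in> S" "nb v 1 \<notin> S"
        | (c) "nb v 5 \<notin> S" "nb v 0 \<notin> S" "nb v 1 \<in> S" | (d) "nb v 5 \<in> S" "nb v 0 \<in> S" "nb v 1 \<notin> S"
        | (e) "nb v 5 \<notin> S" "nb v 0 \<in> S" "nb v 1 \<in> S" | (f) "nb v 5 \<in> S" "nb v 0 \<in> S" "nb v 1 \<in> S"
        using ne False by blast
      then show ?thesis
      proof cases
        case a then show ?thesis by (intro good_intro[OF v _, of 5 1]) (auto simp: N cyc1)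
      next
        case b then show ?thesis by (intro good_intro[OF v _, of 0 1]) (auto simp: N cyc1)
      next
        case c then show ?thesis by (intro good_intro[OF v _, of 1 1]) (auto simp: N cyc1)
      next
        case d then show ?thesis by (intro good_intro[OF v _, of 5 2]) (auto simp: N cyc2)
      next
        case e then show ?thesis by (intro good_intro[OF v _, of 0 2]) (auto simp: N cyc2)
      next
        case f then show ?thesis by (intro good_intro[OF v _, of 5 3]) (auto simp: N cyc3)
      qed
    qed
    then show ?thesis by simp
  next
    case True
    let ?x5 = "nb v 5" and ?x1 = "nb v 1" and ?w = "nb v 0"
    have adjc: "\<forall>n\<in>S. adj v n \<longrightarrow> n = ?x5 \<or> n = ?x1"
    proof (intro ballI impI)
      fix n assume n: "n \<in> S" "adj v n"
      then obtain i where i: "i < 6" "n = nb v i" by (auto simp: adj_def)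
      then have "i \<in> {5,0,1}" using out n by blast
      then show "n = ?x5 \<or> n = ?x1" using True i n by auto
    qed
    have nc: "(?x5, ?x1) \<notin> (E (S - {v}))\<^sup>*"
    proof
      assume h: "(?x5, ?x1) \<in> (E (S - {v}))\<^sup>*"
      have "?x5 \<in> S - {v}" using True nb_neq by auto
      then obtain xs where xs: "xs \<noteq> []" "hd xs = ?x5" "last xs = ?x1" "successively adj xs" "set xs \<subseteq> S - {v}"
        using walk_of_rt h by blast
      have cw: "closed_walk (v # xs @ [v])"
        using xs by (intro closed_walk_loop) (auto simp: adj_nb adj_sym)
      have sub: "set (v # xs @ [v]) \<subseteq> S" using xs v by auto
      have wn: "?w \<notin> set (v # xs @ [v])" using True sub by blast
      have c1: "crossesL ?w v ?x5" by (simp add: crossesL_def nb_coords nb_one)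
      have c2: "\<not> crossesL ?w ?x1 v" by (simp add: crossesL_def nb_coords nb_one)
      have c3: "crg (crossesL ?w) xs = 0"
      proof (rule crg_zero)
        fix x y assume xy: "x \<in> set xs" "y \<in> set xs"
        have noz: "\<not> (snd z = snd v \<and> fst z < fst v + 1)" if "z \<in> set xs" for z
        proof
          assume h: "snd z = snd v \<and> fst z < fst v + 1"
          have "z \<in> S" "z \<noteq> v" using that xs(5) by auto
          then have "f_of v \<le> f_of z" using mn by auto
          then have "fst z = fst v" using h by (simp add: f_of_def)
          then have "z = v" using h by (simp add: prod_eq_iff)
          then show False using \<open>z \<noteq> v\<close> by simp
        qed
        show "\<not> crossesL ?w x y" using noz[OF xy(1)] noz[OF xy(2)] by (auto simp: crossesL_def nb_coords)
      qed
      have "odd (crg (crossesL ?w) (v # xs @ [v]))"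
        using crg_loop[OF xs(1), of "crossesL ?w" v] xs c1 c2 c3 by simp
      then have "odd (crg (crosses ?w) (v # xs @ [v]))" using LR[OF cw wn] by presburger
      then have "\<not> outer_face S ?w" using J_lemma[OF cw sub] True by blast
      then show False using s True unfolding sc_def by blast
    qed
    show ?thesis using True adjc nc by blast
  qed
qed


lemma split_half:
  assumes IH: "\<forall>T. card T < card S \<and> finite T \<and> connected_pts T \<and> sc T \<and> 2 \<le> card T \<longrightarrow>
                 (\<exists>u u'. u \<in> T \<and> u' \<in> T \<and> u \<noteq> u' \<and> good T u \<and> good T u')"
    and fin: "finite S" and con: "connected_pts S" and s: "sc S" and v: "v \<in> S"
    and x: "x \<in> S" "x \<noteq> v" "adj v x" and y: "y \<in> S" "y \<noteq> v" "adj v y"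
    and only: "\<forall>n\<in>S. adj v n \<longrightarrow> n = x \<or> n = y"
    and w: "w \<notin> S" "adj y w"
    and nc: "(x,y) \<notin> (E (S - {v}))\<^sup>*"
  shows "\<exists>u. u \<in> S \<and> u \<noteq> v \<and> (x,u) \<in> (E (S - {v}))\<^sup>* \<and> good S u"
proof -
  define T where "T = S - {v}"
  define A where "A = comp T x"
  define B where "B = comp T y"
  define SA where "SA = insert v A"
  have xT: "x \<in> T" and yT: "y \<in> T" using x y by (auto simp: T_def)
  have AT: "A \<subseteq> T" unfolding A_def comp_def using rt_in[OF _ xT] by blast
  have BT: "B \<subseteq> T" unfolding B_def comp_def using rt_in[OF _ yT] by blast
  have xA: "x \<in> A" by (simp add: A_def comp_def)
  have yB: "y \<in> B" by (simp add: B_def comp_def)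
  have cover: "z \<in> A \<or> z \<in> B" if z: "z \<in> T" for z
  proof -
    have "(z, v) \<in> (E S)\<^sup>*" using con z v by (auto simp: connected_pts_def T_def)
    moreover have "z \<in> S - {v}" using z by (simp add: T_def)
    ultimately have "(\<exists>n. n \<in> S - {v} \<and> adj v n \<and> (z,n) \<in> (E (S - {v}))\<^sup>*) \<or> (v \<in> S - {v} \<and> (z,v) \<in> (E (S - {v}))\<^sup>*)"
      by (rule reroute)
    then obtain n where n: "n \<in> T" "adj v n" "(z, n) \<in> (E T)\<^sup>*"
      unfolding T_def by blast
    then have "n = x \<or> n = y" using only by (auto simp: T_def)
    moreover have "(n, z) \<in> (E T)\<^sup>*" using n(3) by (rule rt_sym)
    ultimately show ?thesis unfolding A_def B_def comp_def by blast
  qed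
  have disj: "A \<inter> B = {}"
  proof (rule ccontr)
    assume "A \<inter> B \<noteq> {}"
    then obtain z where "(x,z) \<in> (E T)\<^sup>*" "(y,z) \<in> (E T)\<^sup>*" by (auto simp: A_def B_def comp_def)
    then have "(x,y) \<in> (E T)\<^sup>*" using rt_sym by (meson rtrancl_trans)
    then show False using nc by (simp add: T_def)
  qed
  have SAS: "SA \<subseteq> S" using AT v by (auto simp: SA_def T_def)
  have yn: "y \<notin> SA" using yB disj y by (auto simp: SA_def)
  have cardlt: "card SA < card S" using SAS yn y fin by (metis psubsetI psubset_card_mono)
  have finA: "finite SA" using SAS fin by (rule finite_subset)
  have card2: "2 \<le> card SA"
  proof -
    have "{v, x} \<subseteq> SA" using xA by (auto simp: SA_def)
    moreover have "card {v, x} = 2" using x by auto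
    ultimately show ?thesis using finA by (metis card_mono)
  qed
  have conA: "connected_pts SA"
  proof -
    have "(x, z) \<in> (E SA)\<^sup>*" if "z \<in> SA" for z
    proof (cases "z = v")
      case True
      have "x \<in> SA" "v \<in> SA" using xA by (auto simp: SA_def)
      then show ?thesis using True x(3) by (simp add: rt_edge adj_sym)
    next
      case False
      then have "(x, z) \<in> (E T)\<^sup>*" using that by (auto simp: SA_def A_def comp_def)
      then have "(x, z) \<in> (E A)\<^sup>*" using rt_within by (simp add: A_def)
      then show ?thesis by (rule rt_mono[rotated]) (auto simp: SA_def)
    qed
    then show ?thesis unfolding connected_pts_def using rt_sym by (meson rtrancl_trans)
  qed
  have scA: "sc SA"
    unfolding sc_def
  proof (intro allI impI)
    fix p assume p: "p \<notin> SA"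
    show "outer_face SA p"
    proof (cases "p \<in> S")
      case False
      then show ?thesis using s SAS outer_mono unfolding sc_def by blast
    next
      case True
      then have "p \<in> T" "p \<notin> A" using p by (auto simp: T_def SA_def)
      then have "p \<in> B" using cover by blast
      then have "(y, p) \<in> (E T)\<^sup>*" by (simp add: B_def comp_def)
      then have "(y, p) \<in> (E B)\<^sup>*" using rt_within by (simp add: B_def)
      moreover have "B \<subseteq> - SA" using disj BT by (auto simp: SA_def T_def)
      ultimately have yp: "(y, p) \<in> (E (- SA))\<^sup>*" by (rule rt_mono[rotated])
      have "(y, w) \<in> (E (- SA))\<^sup>*" using yn w SAS by (intro rt_edge) auto
      then have pw: "(p, w) \<in> (E (- SA))\<^sup>*" using yp rt_sym by (meson rtrancl_trans)
      have "outer_face S w" using s w unfolding sc_def by blast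
      then show ?thesis using outer_via[OF SAS _ p pw] by blast
    qed
  qed
  obtain u1 u2 where u: "u1 \<in> SA" "u2 \<in> SA" "u1 \<noteq> u2" "good SA u1" "good SA u2"
    using IH cardlt finA conA scA card2 by blast
  obtain u where uu: "u \<in> SA" "u \<noteq> v" "good SA u" using u by metis
  then have uA: "u \<in> A" by (simp add: SA_def)
  have nbeq: "{j. j < 6 \<and> nb u j \<in> S} = {j. j < 6 \<and> nb u j \<in> SA}"
  proof (intro Collect_cong conj_cong refl iffI)
    fix j assume "nb u j \<in> S"
    show "nb u j \<in> SA"
    proof (cases "nb u j = v")
      case True then show ?thesis by (simp add: SA_def)
    next
      case False
      then have "nb u j \<in> T" using \<open>nb u j \<in> S\<close> by (simp add: T_def)
      moreover have "u \<in> T" using uA AT by auto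
      ultimately have "(u, nb u j) \<in> (E T)\<^sup>*" by (intro rt_edge) (auto simp: adj_nb)
      then have "nb u j \<in> A" using uA by (auto simp: A_def comp_def)
      then show ?thesis by (simp add: SA_def)
    qed
  next
    fix j assume "nb u j \<in> SA" then show "nb u j \<in> S" using SAS by auto
  qed
  have "good S u" using uu(3) SAS nbeq unfolding good_def by auto
  moreover have "(x,u) \<in> (E (S - {v}))\<^sup>*" using uA by (simp add: A_def comp_def T_def)
  ultimately show ?thesis using uu SAS by blast
qed

lemma split_two:
  assumes IH: "\<forall>T. card T < card S \<and> finite T \<and> connected_pts T \<and> sc T \<and> 2 \<le> card T \<longrightarrow>
                 (\<exists>u u'. u \<in> T \<and> u' \<in> T \<and> u \<noteq> u' \<and> good T u \<and> good T u')"
    and fin: "finite S" and con: "connected_pts S" and s: "sc S" and v: "v \<in> S"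
    and x: "x \<in> S" "x \<noteq> v" "adj v x" and y: "y \<in> S" "y \<noteq> v" "adj v y"
    and only: "\<forall>n\<in>S. adj v n \<longrightarrow> n = x \<or> n = y"
    and w: "w \<notin> S" "adj x w" "adj y w"
    and nc: "(x,y) \<notin> (E (S - {v}))\<^sup>*"
  shows "\<exists>u u'. u \<in> S \<and> u' \<in> S \<and> u \<noteq> u' \<and> good S u \<and> good S u'"
proof -
  obtain u1 where u1: "u1 \<in> S" "(x,u1) \<in> (E (S - {v}))\<^sup>*" "good S u1"
    using split_half[OF IH fin con s v x y only w(1,3) nc] by blast
  have nc': "(y,x) \<notin> (E (S - {v}))\<^sup>*" using nc rt_sym by blast
  have only': "\<forall>n\<in>S. adj v n \<longrightarrow> n = y \<or> n = x" using only by blast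
  obtain u2 where u2: "u2 \<in> S" "(y,u2) \<in> (E (S - {v}))\<^sup>*" "good S u2"
    using split_half[OF IH fin con s v y x only' w(1,2) nc'] by blast
  have "u1 \<noteq> u2"
  proof
    assume "u1 = u2"
    then have "(x,y) \<in> (E (S - {v}))\<^sup>*" using u1(2) u2(2) rt_sym by (meson rtrancl_trans)
    then show False using nc by simp
  qed
  then show ?thesis using u1 u2 by blast
qed

lemma f_nb_neq: "f_of (nb v i) \<noteq> f_of v"
  by (cases rule: nb_cases[of i v]) (auto simp: f_of_def)

lemma two_good:
  "finite S \<Longrightarrow> connected_pts S \<Longrightarrow> sc S \<Longrightarrow> 2 \<le> card S \<Longrightarrow>
   \<exists>u u'. u \<in> S \<and> u' \<in> S \<and> u \<noteq> u' \<and> good S u \<and> good S u'"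
proof (induction "card S" arbitrary: S rule: less_induct)
  case less
  note IH = less.hyps
  have fin: "finite S" and con: "connected_pts S" and s: "sc S" and c2: "2 \<le> card S" by fact+
  have ne: "S \<noteq> {}" using c2 by auto
  have fne: "f_of ` S \<noteq> {}" "finite (f_of ` S)" using ne fin by auto
  obtain vM where vM: "vM \<in> S" "f_of vM = Max (f_of ` S)" using Max_in[OF fne(2,1)] by auto
  obtain vm where vm: "vm \<in> S" "f_of vm = Min (f_of ` S)" using Min_in[OF fne(2,1)] by auto
  have mx: "\<forall>x\<in>S. f_of x \<le> f_of vM" using vM fin by simp
  have mn: "\<forall>x\<in>S. f_of vm \<le> f_of x" using vm fin by simp
  have other: "\<exists>w\<in>S. w \<noteq> z" if "z \<in> S" for z
  proof (rule ccontr)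
    assume "\<not> ?thesis"
    then have "S = {z}" using that by blast
    then show False using c2 by simp
  qed
  obtain wM where wM: "wM \<in> S" "wM \<noteq> vM" using other[OF vM(1)] by blast
  obtain wm where wm: "wm \<in> S" "wm \<noteq> vm" using other[OF vm(1)] by blast
  have dist: "vM \<noteq> vm"
  proof
    assume eq: "vM = vm"
    obtain i where "i < 6" "nb vM i \<in> S" using connected_nb[OF con vM(1) wM] by blast
    then have "f_of (nb vM i) = f_of vM" using mx mn eq by (metis antisym)
    then show False using f_nb_neq by blast
  qed
  have adj23: "adj (nb v 2) (nb v 3)" "adj (nb v 4) (nb v 3)" for v
    using adj_consec[of v 2] adj_consec[of v 3] adj_sym by auto
  have adj501: "adj (nb v 5) (nb v 0)" "adj (nb v 1) (nb v 0)" for v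
  proof -
    show "adj (nb v 5) (nb v 0)" using adj_consec[of v 5] nb_mod[of v 6] by simp
    show "adj (nb v 1) (nb v 0)" using adj_consec[of v 0] adj_sym by simp
  qed
  have IH': "\<forall>T. card T < card S \<and> finite T \<and> connected_pts T \<and> sc T \<and> 2 \<le> card T \<longrightarrow>
                 (\<exists>u u'. u \<in> T \<and> u' \<in> T \<and> u \<noteq> u' \<and> good T u \<and> good T u')"
    using IH by blast
  from max_case[OF con s vM(1) mx wM] show ?case
  proof
    assume bad: "nb vM 2 \<in> S \<and> nb vM 4 \<in> S \<and> nb vM 3 \<notin> S \<and> (\<forall>n\<in>S. adj vM n \<longrightarrow> n = nb vM 2 \<or> n = nb vM 4)
           \<and> (nb vM 2, nb vM 4) \<notin> (E (S - {vM}))\<^sup>*"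
    show ?thesis
      by (rule split_two[OF IH' fin con s vM(1), where x="nb vM 2" and y="nb vM 4" and w="nb vM 3"])
         (use bad adj23 nb_neq adj_nb in auto)
  next
    assume gM: "good S vM"
    from min_case[OF con s vm(1) mn wm] show ?case
    proof
      assume bad: "nb vm 5 \<in> S \<and> nb vm 1 \<in> S \<and> nb vm 0 \<notin> S \<and> (\<forall>n\<in>S. adj vm n \<longrightarrow> n = nb vm 5 \<or> n = nb vm 1)
           \<and> (nb vm 5, nb vm 1) \<notin> (E (S - {vm}))\<^sup>*"
      show ?thesis
        by (rule split_two[OF IH' fin con s vm(1), where x="nb vm 5" and y="nb vm 1" and w="nb vm 0"])
           (use bad adj501 nb_neq adj_nb in auto)
    next
      assume "good S vm"
      then show ?thesis using gM dist vM vm by blast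
    qed
  qed
qed


lemma S0_sub_area: "S0 \<subseteq> area S0"
  by (auto simp: area_def outer_face_def)

lemma area_hole_nbs:
  assumes "x \<in> area S0" "x \<notin> S0"
  shows "nb x i \<in> area S0"
proof (cases "nb x i \<in> S0")
  case True then show ?thesis using S0_sub_area by auto
next
  case False
  have "(x, nb x i) \<in> (E (- S0))\<^sup>*" using False assms(2) by (intro rt_edge) (auto simp: adj_nb)
  then have "comp (- S0) (nb x i) = comp (- S0) x" by (rule comp_eq)
  then show ?thesis using assms False by (auto simp: area_def outer_face_comp)
qed

lemma ray_coords:
  "ray p 0 k = (fst p + int k, snd p)" "ray p 2 k = (fst p, snd p - int k)"
  "ray p 3 k = (fst p - int k, snd p)" "ray p 5 k = (fst p, snd p + int k)"
  by (simp_all add: ray_def dir_def)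

lemma area_finite:
  assumes fin: "finite S0"
  shows "finite (area S0)"
proof -
  define M where "M = Max (insert 0 ((\<lambda>p. \<bar>fst p\<bar> + \<bar>snd p\<bar>) ` S0))"
  have M: "\<bar>fst x\<bar> + \<bar>snd x\<bar> \<le> M" if "x \<in> S0" for x
    using fin that by (auto simp: M_def)
  have "area S0 \<subseteq> {-2*M..2*M} \<times> {-M..M}"
  proof
    fix p assume p: "p \<in> area S0"
    have b1: "snd p \<le> M"
    proof (rule ccontr)
      assume "\<not> snd p \<le> M"
      then have "\<forall>k. ray p 5 k \<notin> S0" using M by (force simp: ray_coords)
      then show False using ray_outer p by (auto simp: area_def)
    qed
    have b2: "snd p \<ge> -M"
    proof (rule ccontr)
      assume "\<not> snd p \<ge> -M"
      then have "\<forall>k. ray p 2 k \<notin> S0" using M by (force simp: ray_coords)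
      then show False using ray_outer p by (auto simp: area_def)
    qed
    have b3: "2 * fst p + snd p \<le> 3 * M"
    proof (rule ccontr)
      assume h: "\<not> 2 * fst p + snd p \<le> 3 * M"
      have "ray p 0 k \<notin> S0" for k
      proof
        assume "ray p 0 k \<in> S0"
        then have "\<bar>fst p + int k\<bar> + \<bar>snd p\<bar> \<le> M" using M by (force simp: ray_coords)
        then show False using h by linarith
      qed
      then have "outer_face S0 p" by (intro ray_outer) blast
      then show False using p by (auto simp: area_def)
    qed
    have b4: "2 * fst p + snd p \<ge> -3 * M"
    proof (rule ccontr)
      assume h: "\<not> 2 * fst p + snd p \<ge> -3 * M"
      have "ray p 3 k \<notin> S0" for k
      proof
        assume "ray p 3 k \<in> S0"
        then have "\<bar>fst p - int k\<bar> + \<bar>snd p\<bar> \<le> M" using M by (force simp: ray_coords)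
        then show False using h by linarith
      qed
      then have "outer_face S0 p" by (intro ray_outer) blast
      then show False using p by (auto simp: area_def)
    qed
    show "p \<in> {-2*M..2*M} \<times> {-M..M}" using b1 b2 b3 b4 by (cases p) auto
  qed
  then show ?thesis by (rule finite_subset) simp
qed

lemma area_sc:
  shows "sc (area S0)"
  unfolding sc_def
proof (intro allI impI)
  fix p assume p: "p \<notin> area S0"
  then have o: "outer_face S0 p" by (simp add: area_def)
  have sub: "comp (- S0) p \<subseteq> - area S0"
  proof
    fix q assume "q \<in> comp (- S0) p"
    then have q: "(p,q) \<in> (E (- S0))\<^sup>*" by (simp add: comp_def)
    then have "comp (- S0) q = comp (- S0) p" by (rule comp_eq)
    moreover have "q \<notin> S0" using rt_in[OF q] o by (auto simp: outer_face_def)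
    ultimately have "outer_face S0 q" using o by (simp add: outer_face_comp)
    then show "q \<in> - area S0" by (simp add: area_def)
  qed
  have "comp (- S0) p \<subseteq> comp (- area S0) p"
  proof
    fix q assume "q \<in> comp (- S0) p"
    then have "(p,q) \<in> (E (comp (- S0) p))\<^sup>*" using rt_within by (simp add: comp_def)
    then have "(p,q) \<in> (E (- area S0))\<^sup>*" using rt_mono[OF sub] by blast
    then show "q \<in> comp (- area S0) p" by (simp add: comp_def)
  qed
  then show "outer_face (area S0) p" using o p by (auto simp: outer_face_comp dest: finite_subset)
qed

lemma area_reach:
  assumes fin: "finite S0" and h: "h \<in> area S0"
  shows "\<exists>s\<in>S0. (h, s) \<in> (E (area S0))\<^sup>*"
proof (cases "h \<in> S0")
  case True then show ?thesis by blast
next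
  case False
  let ?C = "comp (- S0) h"
  have finC: "finite ?C" using h False by (simp add: area_def outer_face_comp)
  have hC: "h \<in> ?C" by (simp add: comp_def)
  then have ne: "f_of ` ?C \<noteq> {}" by auto
  obtain z where z: "z \<in> ?C" "f_of z = Max (f_of ` ?C)" using Max_in[OF finite_imageI[OF finC] ne] by auto
  have zmax: "\<forall>y\<in>?C. f_of y \<le> f_of z" using z finC by simp
  have hz: "(h, z) \<in> (E (- S0))\<^sup>*" using z by (simp add: comp_def)
  have "nb z 0 \<in> S0"
  proof (rule ccontr)
    assume n: "nb z 0 \<notin> S0"
    have zS: "z \<notin> S0" using rt_in[OF hz] False by auto
    have "(z, nb z 0) \<in> (E (- S0))\<^sup>*" using n zS by (intro rt_edge) (auto simp: adj_nb)
    then have "nb z 0 \<in> ?C" using hz by (simp add: comp_def)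
    then show False using zmax f_nb(1)[of z] by fastforce
  qed
  have Csub: "?C \<subseteq> area S0"
  proof
    fix q assume "q \<in> ?C"
    then have q: "(h,q) \<in> (E (- S0))\<^sup>*" by (simp add: comp_def)
    then have "comp (- S0) q = ?C" by (rule comp_eq)
    then show "q \<in> area S0" using finC by (simp add: area_def outer_face_comp)
  qed
  have "(h, z) \<in> (E ?C)\<^sup>*" using rt_within[OF hz] .
  then have "(h, z) \<in> (E (area S0))\<^sup>*" using rt_mono[OF Csub] by blast
  moreover have "(z, nb z 0) \<in> (E (area S0))\<^sup>*"
    using Csub z(1) \<open>nb z 0 \<in> S0\<close> S0_sub_area by (intro rt_edge) (auto simp: adj_nb)
  ultimately show ?thesis using \<open>nb z 0 \<in> S0\<close> by (meson rtrancl_trans)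
qed

lemma area_connected:
  assumes fin: "finite S0" and con: "connected_pts S0"
  shows "connected_pts (area S0)"
  unfolding connected_pts_def
proof (intro ballI)
  fix x y assume x: "x \<in> area S0" and y: "y \<in> area S0"
  obtain s1 where s1: "s1 \<in> S0" "(x, s1) \<in> (E (area S0))\<^sup>*" using area_reach[OF fin x] by blast
  obtain s2 where s2: "s2 \<in> S0" "(y, s2) \<in> (E (area S0))\<^sup>*" using area_reach[OF fin y] by blast
  have "(s1, s2) \<in> (E S0)\<^sup>*" using con s1 s2 by (simp add: connected_pts_def)
  then have "(s1, s2) \<in> (E (area S0))\<^sup>*" using rt_mono[OF S0_sub_area] by blast
  then show "(x, y) \<in> (E (area S0))\<^sup>*" using s1 s2 rt_sym by (meson rtrancl_trans)
qed


definition Eupd :: "('p \<Rightarrow> nat) \<Rightarrow> 'p config \<Rightarrow> point \<Rightarrow> 'p \<Rightarrow> nat \<Rightarrow> bool" where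
  "Eupd off c v = (\<lambda>q j. elig c q j \<and> \<not> (adj (phead c q) v \<and> port_pt off q (phead c q) j = v))"

definition Ucand :: "'p set \<Rightarrow> 'p config \<Rightarrow> point \<Rightarrow> point set" where
  "Ucand P c v = {u. adj v u \<and> u \<in> Se c - {v} \<and> u \<notin> occupied P c}"

lemma step_cases:
  assumes "c' \<in> dle_succ P off c p"
  shows "c' = c \<or>
  (\<not> fin c p \<and> \<not> contracted c p \<and> c' = c\<lparr>ptail := (ptail c)(p := phead c p)\<rparr>) \<or>
  (\<not> fin c p \<and> contracted c p \<and> st c p \<noteq> Undecided \<and> (\<forall>q\<in>neighbours P c p. st c q \<noteq> Undecided) \<and>
     c' = c\<lparr>fin := (fin c)(p := True)\<rparr>) \<or>
  (\<not> fin c p \<and> contracted c p \<and> st c p = Undecided \<and> (\<forall>i<6. \<not> elig c p i) \<and>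
     c' = c\<lparr>st := (st c)(p := Leader)\<rparr>) \<or>
  (\<exists>u. \<not> fin c p \<and> contracted c p \<and> st c p = Undecided \<and> (\<exists>i<6. elig c p i) \<and> SCE (Se c) (phead c p) \<and>
     u \<in> Ucand P c (phead c p) \<and>
     c' = c\<lparr>Se := Se c - {phead c p}, elig := (Eupd off c (phead c p))(p := (\<lambda>j. port_pt off p u j \<noteq> phead c p)),
             phead := (phead c)(p := u)\<rparr>) \<or>
  (\<not> fin c p \<and> contracted c p \<and> st c p = Undecided \<and> (\<exists>i<6. elig c p i) \<and> SCE (Se c) (phead c p) \<and>
     Ucand P c (phead c p) = {} \<and>
     c' = c\<lparr>Se := Se c - {phead c p}, elig := Eupd off c (phead c p), st := (st c)(p := Follower)\<rparr>)"
  using assms unfolding dle_succ_def Let_def Eupd_def Ucand_def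
  by (auto split: if_splits)

definition inv_geo where "inv_geo S \<longleftrightarrow> finite S \<and> connected_pts S \<and> sc S \<and> S \<noteq> {}"
definition inv_disj where "inv_disj P c \<longleftrightarrow> (\<forall>p\<in>P. \<forall>q\<in>P. p \<noteq> q \<longrightarrow>
   phead c p \<noteq> phead c q \<and> phead c p \<noteq> ptail c q \<and> ptail c p \<noteq> ptail c q)"
definition inv_und where "inv_und P off c \<longleftrightarrow> (\<forall>p\<in>P. st c p = Undecided \<longrightarrow> phead c p \<in> Se c \<and>
   (\<forall>i<6. elig c p i \<longleftrightarrow> port_pt off p (phead c p) i \<in> Se c))"
definition inv_exp where "inv_exp P c \<longleftrightarrow> (\<forall>p\<in>P. \<not> contracted c p \<longrightarrow> st c p = Undecided \<and> ptail c p \<notin> Se c \<and> \<not> fin c p)"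
definition inv_fol where "inv_fol P c \<longleftrightarrow> (\<forall>p\<in>P. st c p = Follower \<longrightarrow> phead c p \<notin> Se c)"
definition inv_lead where "inv_lead P c \<longleftrightarrow> (\<forall>p\<in>P. st c p = Leader \<longrightarrow> Se c = {phead c p})"
definition inv_fin where "inv_fin P c \<longleftrightarrow> (\<forall>p\<in>P. fin c p \<longrightarrow> st c p \<noteq> Undecided)"
definition inv_cov where "inv_cov P c \<longleftrightarrow> (\<forall>x\<in>Se c. (\<exists>p\<in>P. phead c p = x \<and> st c p \<noteq> Follower) \<or>
   ((\<forall>p\<in>P. phead c p \<noteq> x \<and> ptail c p \<noteq> x) \<and> (\<forall>i. nb x i \<in> Se c)))"

definition inv :: "'p set \<Rightarrow> ('p \<Rightarrow> nat) \<Rightarrow> 'p config \<Rightarrow> bool" where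
  "inv P off c \<longleftrightarrow> finite P \<and> inv_geo (Se c) \<and> inv_disj P c \<and> inv_und P off c \<and> inv_exp P c \<and>
     inv_fol P c \<and> inv_lead P c \<and> inv_fin P c \<and> inv_cov P c"

lemma port_nb: "port_pt off p x j = nb x (j + off p)"
  by (simp add: port_pt_def)

lemma adj_port: "adj x (port_pt off p x j)"
  by (simp add: port_nb adj_nb)

lemma port_surj: "\<exists>j<6. port_pt off p x j = nb x i"
proof -
  let ?j = "(i mod 6 + 6 - off p mod 6) mod 6"
  have "(off p + ?j) mod 6 = i mod 6" using t1[of "off p" "off p mod 6" "i mod 6"] by simp
  then have "port_pt off p x ?j = nb x i" by (metis port_nb nb_mod add.commute)
  then show ?thesis by (intro exI[of _ ?j]) simp
qed

lemma interior_unique: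
  assumes three: "nb v i0 \<notin> S" "nb v (i0+1) \<notin> S" "nb v (i0+2) \<notin> S"
    and u: "u \<in> S" "\<forall>i. nb u i \<in> S" "adj v u"
  shows "u = nb v (i0 + 4)"
proof -
  obtain j where j: "j < 6" "u = nb v j" using u(3) by (auto simp: adj_def)
  define d where "d = (j + 6 - i0 mod 6) mod 6"
  have "(i0 + d) mod 6 = j" using t1[of i0 "i0 mod 6" j] j by (simp add: d_def)
  then have ud: "u = nb v (i0 + d)" using j nb_mod by metis
  have "d < 6" by (simp add: d_def)
  then have "d = 0 \<or> d = 1 \<or> d = 2 \<or> d = 3 \<or> d = 4 \<or> d = 5" by (rule less6)
  then show ?thesis
  proof (elim disjE)
    assume "d = 0" then show ?thesis using ud three u by simp
  next
    assume "d = 1" then show ?thesis using ud three u by simp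
  next
    assume "d = 2" then show ?thesis using ud three u by simp
  next
    assume "d = 3"
    have e: "i0 + 2 + 2 = i0 + 4" "i0 + 2 + 1 = i0 + 3" "i0 + 4 + 3 = i0 + 7" by simp_all
    have "u = nb (nb v (i0+2)) (i0 + 4)" using ud \<open>d = 3\<close> nb_consec[of v "i0+2", unfolded e] by simp
    then have "nb u (i0 + 7) = nb v (i0+2)" using nb_back[of "nb v (i0+2)" "i0+4", unfolded e] by simp
    then show ?thesis using three u by metis
  next
    assume "d = 4" then show ?thesis using ud by simp
  next
    assume "d = 5"
    have e: "i0 + 5 + 2 = i0 + 7" "i0 + 5 + 1 = i0 + 6" by simp_all
    have "nb u (i0 + 7) = nb v (i0 + 6)" using ud \<open>d = 5\<close> nb_consec[of v "i0+5", unfolded e] by simp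
    also have "nb v (i0 + 6) = nb v i0" using nb_mod[of v "i0+6"] nb_mod[of v i0] by simp
    finally show ?thesis using three u by metis
  qed
qed

lemma geo_remove:
  assumes g: "inv_geo S" and sce: "SCE S v" and n: "n \<in> S" "n \<noteq> v"
  shows "inv_geo (S - {v})"
proof -
  have fin: "finite S" and con: "connected_pts S" and s: "sc S" using g by (auto simp: inv_geo_def)
  have red: "redundant S v" and ob: "v \<in> outer_boundary S" using sce by (auto simp: SCE_def erodable_def)
  have vS: "v \<in> S" using red by (simp add: redundant_def boundary_point_def)
  have cn: "connected_pts (nbset S v)" using red by (simp add: redundant_def nbset_def)
  have con': "connected_pts (S - {v})" by (rule connected_remove[OF con vS cn])
  have sc': "sc (S - {v})"
    unfolding sc_def
  proof (intro allI impI)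
    fix q assume q: "q \<notin> S - {v}"
    show "outer_face (S - {v}) q"
    proof (cases "q = v")
      case False
      then have "q \<notin> S" using q by simp
      then have "outer_face S q" using s unfolding sc_def by blast
      then show ?thesis by (rule outer_mono[rotated]) auto
    next
      case True
      obtain i where i: "i < 6" "outer_face S (nb v i)" using ob by (auto simp: outer_boundary_def)
      have "nb v i \<notin> S" using i(2) by (simp add: outer_face_def)
      then have "(v, nb v i) \<in> (E (- (S - {v})))\<^sup>*" by (intro rt_edge) (auto simp: adj_nb)
      then show ?thesis using outer_via[of "S - {v}" S "nb v i" v] i(2) True by auto
    qed
  qed
  show ?thesis using fin con' sc' n by (auto simp: inv_geo_def)
qed

lemma no_leader_if_undecided:
  assumes "inv_lead P c" "inv_disj P c" "p \<in> P" "st c p = Undecided" "phead c p \<in> Se c"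
  shows "\<forall>q\<in>P. st c q \<noteq> Leader"
proof (intro ballI notI)
  fix q assume q: "q \<in> P" "st c q = Leader"
  then have "Se c = {phead c q}" using assms(1) by (auto simp: inv_lead_def)
  then have "phead c p = phead c q" using assms(5) by auto
  then have "p = q" using assms(2,3) q(1) by (auto simp: inv_disj_def)
  then show False using assms(4) q(2) by simp
qed

lemma elig_nb_exists:
  assumes "inv_und P off c" "p \<in> P" "st c p = Undecided" "\<exists>i<6. elig c p i"
  shows "\<exists>n\<in>Se c. n \<noteq> phead c p"
proof -
  obtain i where "i < 6" "elig c p i" using assms(4) by blast
  then have "port_pt off p (phead c p) i \<in> Se c" using assms(1-3) by (auto simp: inv_und_def)
  moreover have "port_pt off p (phead c p) i \<noteq> phead c p" by (simp add: port_nb nb_neq)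
  ultimately show ?thesis by blast
qed

lemma Eupd_acc:
  assumes "\<forall>i<6. elig c q i \<longleftrightarrow> port_pt off q (phead c q) i \<in> S" "i < 6"
  shows "Eupd off c v q i \<longleftrightarrow> port_pt off q (phead c q) i \<in> S - {v}"
  using assms adj_port[of "phead c q" off q i] by (auto simp: Eupd_def)

lemma inv_S4:
  assumes I: "inv P off c" and p: "p \<in> P" and nf: "\<not> fin c p" and ct: "contracted c p"
    and un: "st c p = Undecided" and el: "\<exists>i<6. elig c p i" and sce: "SCE (Se c) (phead c p)"
    and uU: "u \<in> Ucand P c (phead c p)"
    and c': "c' = c\<lparr>Se := Se c - {phead c p}, elig := (Eupd off c (phead c p))(p := (\<lambda>j. port_pt off p u j \<noteq> phead c p)),
             phead := (phead c)(p := u)\<rparr>"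
  shows "inv P off c'"
proof -
  define S where "S = Se c"
  define v where "v = phead c p"
  have finP: "finite P" and geo: "inv_geo S" and disj: "inv_disj P c" and und: "inv_und P off c"
    and exp: "inv_exp P c" and fol: "inv_fol P c" and lead: "inv_lead P c" and fi: "inv_fin P c"
    and cov: "inv_cov P c"
    using I by (auto simp: inv_def S_def)
  have vS: "v \<in> S" using und p un by (auto simp: inv_und_def S_def v_def)
  have tv: "ptail c p = v" using ct by (simp add: contracted_def v_def)
  obtain n where n: "n \<in> S" "n \<noteq> v" using elig_nb_exists[OF und p un el] by (auto simp: S_def v_def)
  have geo': "inv_geo (S - {v})" using geo_remove[OF geo _ n] sce by (simp add: S_def v_def)
  obtain i0 where three: "nb v i0 \<notin> S" "nb v (i0+1) \<notin> S" "nb v (i0+2) \<notin> S"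
    using SCE_three[OF sce] by (auto simp: S_def v_def)
  have u: "adj v u" "u \<in> S" "u \<noteq> v" "\<forall>q\<in>P. phead c q \<noteq> u \<and> ptail c q \<noteq> u"
    using uU by (auto simp: Ucand_def S_def v_def occupied_def)
  have uint: "\<forall>i. nb u i \<in> S"
    using cov u(2,4) by (auto simp: inv_cov_def S_def)
  have nolead: "\<forall>q\<in>P. st c q \<noteq> Leader"
    using no_leader_if_undecided[OF lead disj p un] vS by (simp add: S_def v_def)
  have hd': "phead c' q = (if q = p then u else phead c q)" for q using c' by simp
  have tl': "ptail c' q = ptail c q" "st c' q = st c q" "fin c' q = fin c q" for q using c' by simp_all
  have Se': "Se c' = S - {v}" using c' by (simp add: S_def v_def)
  have el': "elig c' q = (if q = p then (\<lambda>j. port_pt off p u j \<noteq> v) else Eupd off c v q)" for q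
    using c' by (simp add: v_def)
  have hdv: "q \<in> P \<Longrightarrow> q \<noteq> p \<Longrightarrow> phead c q \<noteq> v" for q using disj p by (auto simp: inv_disj_def v_def)
  have d': "inv_disj P c'"
    unfolding inv_disj_def
  proof (intro ballI impI)
    fix q1 q2 assume q: "q1 \<in> P" "q2 \<in> P" "q1 \<noteq> q2"
    show "phead c' q1 \<noteq> phead c' q2 \<and> phead c' q1 \<noteq> ptail c' q2 \<and> ptail c' q1 \<noteq> ptail c' q2"
      using q u(4) disj p unfolding hd' tl' inv_disj_def by (auto split: if_splits)
  qed
  have und': "inv_und P off c'"
    unfolding inv_und_def
  proof (intro ballI impI)
    fix q assume q: "q \<in> P" "st c' q = Undecided"
    show "phead c' q \<in> Se c' \<and> (\<forall>i<6. elig c' q i \<longleftrightarrow> port_pt off q (phead c' q) i \<in> Se c')"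
    proof (cases "q = p")
      case True
      have "port_pt off p u i \<in> S" for i using uint by (simp add: port_nb)
      then show ?thesis using True u by (simp add: hd' el' Se')
    next
      case False
      have acc: "\<forall>i<6. elig c q i \<longleftrightarrow> port_pt off q (phead c q) i \<in> S" and hS: "phead c q \<in> S"
        using und q tl' by (auto simp: inv_und_def S_def)
      show ?thesis using False hS hdv[OF q(1) False] Eupd_acc[OF acc] by (simp add: hd' el' Se')
    qed
  qed
  have exp': "inv_exp P c'"
    unfolding inv_exp_def
  proof (intro ballI impI)
    fix q assume q: "q \<in> P" "\<not> contracted c' q"
    show "st c' q = Undecided \<and> ptail c' q \<notin> Se c' \<and> \<not> fin c' q"
    proof (cases "q = p")
      case True then show ?thesis using un tv nf by (simp add: tl' Se')
    next
      case False
      then have "\<not> contracted c q" using q(2) by (simp add: contracted_def hd' tl')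
      then show ?thesis using exp q(1) by (auto simp: inv_exp_def tl' Se' S_def)
    qed
  qed
  have fol': "inv_fol P c'"
    unfolding inv_fol_def
  proof (intro ballI impI)
    fix q assume q: "q \<in> P" "st c' q = Follower"
    then have "q \<noteq> p" using un tl' by auto
    then show "phead c' q \<notin> Se c'" using fol q by (auto simp: inv_fol_def hd' tl' Se' S_def)
  qed
  have lead': "inv_lead P c'" using nolead by (simp add: inv_lead_def tl')
  have fin': "inv_fin P c'" using fi by (simp add: inv_fin_def tl')
  have cov': "inv_cov P c'"
    unfolding inv_cov_def
  proof (intro ballI)
    fix x assume x: "x \<in> Se c'"
    then have xS: "x \<in> S" "x \<noteq> v" by (auto simp: Se')
    from cov xS(1) have "(\<exists>q\<in>P. phead c q = x \<and> st c q \<noteq> Follower) \<or>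
       ((\<forall>q\<in>P. phead c q \<noteq> x \<and> ptail c q \<noteq> x) \<and> (\<forall>i. nb x i \<in> S))"
      by (auto simp: inv_cov_def S_def)
    then show "(\<exists>q\<in>P. phead c' q = x \<and> st c' q \<noteq> Follower) \<or>
       ((\<forall>q\<in>P. phead c' q \<noteq> x \<and> ptail c' q \<noteq> x) \<and> (\<forall>i. nb x i \<in> Se c'))"
    proof
      assume "\<exists>q\<in>P. phead c q = x \<and> st c q \<noteq> Follower"
      then obtain q where q: "q \<in> P" "phead c q = x" "st c q \<noteq> Follower" by blast
      have "q \<noteq> p" using q(2) xS(2) by (auto simp: v_def)
      then show ?thesis using q by (auto simp: hd' tl')
    next
      assume B: "(\<forall>q\<in>P. phead c q \<noteq> x \<and> ptail c q \<noteq> x) \<and> (\<forall>i. nb x i \<in> S)"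
      show ?thesis
      proof (cases "x = u")
        case True
        then show ?thesis using p un by (auto simp: hd' tl')
      next
        case False
        have nv: "nb x i \<noteq> v" for i
        proof
          assume h: "nb x i = v"
          then have "adj v x" using adj_sym adj_nb by metis
          then have "x = nb v (i0 + 4)" using interior_unique[OF three xS(1)] B by blast
          moreover have "u = nb v (i0 + 4)" using interior_unique[OF three u(2) uint u(1)] .
          ultimately show False using False by simp
        qed
        have "\<forall>q\<in>P. phead c' q \<noteq> x \<and> ptail c' q \<noteq> x" using B False by (simp add: hd' tl')
        moreover have "\<forall>i. nb x i \<in> Se c'" using B nv by (simp add: Se')
        ultimately show ?thesis by blast
      qed
    qed
  qed
  show ?thesis using finP geo' d' und' exp' fol' lead' fin' cov' by (simp add: inv_def Se')
qed

lemma inv_S5: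
  assumes I: "inv P off c" and p: "p \<in> P" and nf: "\<not> fin c p" and ct: "contracted c p"
    and un: "st c p = Undecided" and el: "\<exists>i<6. elig c p i" and sce: "SCE (Se c) (phead c p)"
    and U0: "Ucand P c (phead c p) = {}"
    and c': "c' = c\<lparr>Se := Se c - {phead c p}, elig := Eupd off c (phead c p), st := (st c)(p := Follower)\<rparr>"
  shows "inv P off c'"
proof -
  define S where "S = Se c"
  define v where "v = phead c p"
  have finP: "finite P" and geo: "inv_geo S" and disj: "inv_disj P c" and und: "inv_und P off c"
    and exp: "inv_exp P c" and fol: "inv_fol P c" and lead: "inv_lead P c" and fi: "inv_fin P c"
    and cov: "inv_cov P c"
    using I by (auto simp: inv_def S_def)
  have vS: "v \<in> S" using und p un by (auto simp: inv_und_def S_def v_def)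
  obtain n where n: "n \<in> S" "n \<noteq> v" using elig_nb_exists[OF und p un el] by (auto simp: S_def v_def)
  have geo': "inv_geo (S - {v})" using geo_remove[OF geo _ n] sce by (simp add: S_def v_def)
  have nolead: "\<forall>q\<in>P. st c q \<noteq> Leader"
    using no_leader_if_undecided[OF lead disj p un] vS by (simp add: S_def v_def)
  have hd': "phead c' q = phead c q" "ptail c' q = ptail c q" "fin c' q = fin c q" for q using c' by simp_all
  have st': "st c' q = (if q = p then Follower else st c q)" for q using c' by simp
  have Se': "Se c' = S - {v}" using c' by (simp add: S_def v_def)
  have el': "elig c' q = Eupd off c v q" for q using c' by (simp add: v_def)
  have hdv: "q \<in> P \<Longrightarrow> q \<noteq> p \<Longrightarrow> phead c q \<noteq> v" for q using disj p by (auto simp: inv_disj_def v_def)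
  have d': "inv_disj P c'" using disj by (simp add: inv_disj_def hd')
  have und': "inv_und P off c'"
    unfolding inv_und_def
  proof (intro ballI impI)
    fix q assume q: "q \<in> P" "st c' q = Undecided"
    then have qp: "q \<noteq> p" by (auto simp: st')
    have acc: "\<forall>i<6. elig c q i \<longleftrightarrow> port_pt off q (phead c q) i \<in> S" and hS: "phead c q \<in> S"
      using und q qp by (auto simp: inv_und_def S_def st')
    show "phead c' q \<in> Se c' \<and> (\<forall>i<6. elig c' q i \<longleftrightarrow> port_pt off q (phead c' q) i \<in> Se c')"
      using hS hdv[OF q(1) qp] Eupd_acc[OF acc] by (simp add: hd' el' Se')
  qed
  have exp': "inv_exp P c'"
    unfolding inv_exp_def
  proof (intro ballI impI)
    fix q assume q: "q \<in> P" "\<not> contracted c' q"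
    then have nc: "\<not> contracted c q" by (simp add: contracted_def hd')
    then have qp: "q \<noteq> p" using ct by auto
    show "st c' q = Undecided \<and> ptail c' q \<notin> Se c' \<and> \<not> fin c' q"
      using exp q(1) nc qp by (auto simp: inv_exp_def hd' st' Se' S_def)
  qed
  have fol': "inv_fol P c'"
    unfolding inv_fol_def
  proof (intro ballI impI)
    fix q assume q: "q \<in> P" "st c' q = Follower"
    show "phead c' q \<notin> Se c'"
    proof (cases "q = p")
      case True then show ?thesis by (simp add: hd' Se' v_def)
    next
      case False then show ?thesis using fol q by (auto simp: inv_fol_def hd' st' Se' S_def)
    qed
  qed
  have lead': "inv_lead P c'" using nolead by (simp add: inv_lead_def st')
  have fin': "inv_fin P c'" using fi nf by (auto simp: inv_fin_def st' hd')
  have cov': "inv_cov P c'"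
    unfolding inv_cov_def
  proof (intro ballI)
    fix x assume x: "x \<in> Se c'"
    then have xS: "x \<in> S" "x \<noteq> v" by (auto simp: Se')
    from cov xS(1) have "(\<exists>q\<in>P. phead c q = x \<and> st c q \<noteq> Follower) \<or>
       ((\<forall>q\<in>P. phead c q \<noteq> x \<and> ptail c q \<noteq> x) \<and> (\<forall>i. nb x i \<in> S))"
      by (auto simp: inv_cov_def S_def)
    then show "(\<exists>q\<in>P. phead c' q = x \<and> st c' q \<noteq> Follower) \<or>
       ((\<forall>q\<in>P. phead c' q \<noteq> x \<and> ptail c' q \<noteq> x) \<and> (\<forall>i. nb x i \<in> Se c'))"
    proof
      assume "\<exists>q\<in>P. phead c q = x \<and> st c q \<noteq> Follower"
      then obtain q where q: "q \<in> P" "phead c q = x" "st c q \<noteq> Follower" by blast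
      have "q \<noteq> p" using q(2) xS(2) by (auto simp: v_def)
      then show ?thesis using q by (auto simp: hd' st')
    next
      assume B: "(\<forall>q\<in>P. phead c q \<noteq> x \<and> ptail c q \<noteq> x) \<and> (\<forall>i. nb x i \<in> S)"
      have nv: "nb x i \<noteq> v" for i
      proof
        assume h: "nb x i = v"
        then have "adj v x" using adj_sym adj_nb by metis
        then have "x \<in> Ucand P c (phead c p)" using xS B by (auto simp: Ucand_def occupied_def S_def v_def)
        then show False using U0 by simp
      qed
      show ?thesis using B nv by (simp add: hd' Se')
    qed
  qed
  show ?thesis using finP geo' d' und' exp' fol' lead' fin' cov' by (simp add: inv_def Se')
qed

lemma inv_S3:
  assumes I: "inv P off c" and p: "p \<in> P" and un: "st c p = Undecided" and el: "\<forall>i<6. \<not> elig c p i"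
    and ct: "contracted c p" and c': "c' = c\<lparr>st := (st c)(p := Leader)\<rparr>"
  shows "inv P off c'"
proof -
  define S where "S = Se c"
  define v where "v = phead c p"
  have finP: "finite P" and geo: "inv_geo S" and disj: "inv_disj P c" and und: "inv_und P off c"
    and exp: "inv_exp P c" and fol: "inv_fol P c" and lead: "inv_lead P c" and fi: "inv_fin P c"
    and cov: "inv_cov P c"
    using I by (auto simp: inv_def S_def)
  have vS: "v \<in> S" using und p un by (auto simp: inv_und_def S_def v_def)
  have acc: "\<forall>i<6. elig c p i \<longleftrightarrow> port_pt off p v i \<in> S" using und p un by (auto simp: inv_und_def S_def v_def)
  have nn: "\<forall>i<6. nb v i \<notin> S"
  proof (intro allI impI)
    fix i :: nat assume "i < 6"
    obtain j where "j < 6" "port_pt off p v j = nb v i" using port_surj[of off p v i] by blast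
    then show "nb v i \<notin> S" using acc el by metis
  qed
  have Ssing: "S = {v}" using connected_single[OF _ vS nn] geo by (simp add: inv_geo_def)
  have nolead: "\<forall>q\<in>P. st c q \<noteq> Leader"
    using no_leader_if_undecided[OF lead disj p un] vS by (simp add: S_def v_def)
  have hd': "phead c' q = phead c q" "ptail c' q = ptail c q" "fin c' q = fin c q" "elig c' q = elig c q" for q
    using c' by simp_all
  have st': "st c' q = (if q = p then Leader else st c q)" for q using c' by simp
  have Se': "Se c' = S" using c' by (simp add: S_def)
  have d': "inv_disj P c'" using disj by (simp add: inv_disj_def hd')
  have und': "inv_und P off c'" using und by (auto simp: inv_und_def hd' st' Se' S_def)
  have exp': "inv_exp P c'" using exp ct by (auto simp: inv_exp_def contracted_def hd' st' Se' S_def)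
  have fol': "inv_fol P c'" using fol by (auto simp: inv_fol_def hd' st' Se' S_def)
  have lead': "inv_lead P c'" using nolead Ssing by (auto simp: inv_lead_def hd' st' Se' v_def)
  have fin': "inv_fin P c'" using fi by (auto simp: inv_fin_def hd' st')
  have cov': "inv_cov P c'"
    unfolding inv_cov_def
  proof (intro ballI)
    fix x assume "x \<in> Se c'"
    then have "x = v" using Ssing Se' by simp
    then show "(\<exists>q\<in>P. phead c' q = x \<and> st c' q \<noteq> Follower) \<or>
       ((\<forall>q\<in>P. phead c' q \<noteq> x \<and> ptail c' q \<noteq> x) \<and> (\<forall>i. nb x i \<in> Se c'))"
      using p by (auto simp: hd' st' v_def)
  qed
  show ?thesis using finP geo d' und' exp' fol' lead' fin' cov' by (simp add: inv_def Se')
qed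

lemma inv_S2:
  assumes I: "inv P off c" and p: "p \<in> P" and ct: "contracted c p" and un: "st c p \<noteq> Undecided"
    and c': "c' = c\<lparr>fin := (fin c)(p := True)\<rparr>"
  shows "inv P off c'"
proof -
  have hd': "phead c' q = phead c q" "ptail c' q = ptail c q" "st c' q = st c q" "elig c' q = elig c q" for q
    using c' by simp_all
  have f': "fin c' q = (if q = p then True else fin c q)" for q using c' by simp
  have Se': "Se c' = Se c" using c' by simp
  have "inv_exp P c" "inv_fin P c" using I by (auto simp: inv_def)
  then have "inv_exp P c'" "inv_fin P c'" using ct un by (auto simp: inv_exp_def inv_fin_def contracted_def hd' f' Se')
  moreover have "inv_disj P c' = inv_disj P c" "inv_und P off c' = inv_und P off c" "inv_fol P c' = inv_fol P c"
    "inv_lead P c' = inv_lead P c" "inv_cov P c' = inv_cov P c"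
    by (simp_all add: inv_disj_def inv_und_def inv_fol_def inv_lead_def inv_cov_def hd' Se')
  ultimately show ?thesis using I by (simp add: inv_def Se')
qed

lemma inv_S1:
  assumes I: "inv P off c" and p: "p \<in> P" and ct: "\<not> contracted c p"
    and c': "c' = c\<lparr>ptail := (ptail c)(p := phead c p)\<rparr>"
  shows "inv P off c'"
proof -
  have hd': "phead c' q = phead c q" "fin c' q = fin c q" "st c' q = st c q" "elig c' q = elig c q" for q
    using c' by simp_all
  have tl': "ptail c' q = (if q = p then phead c p else ptail c q)" for q using c' by simp
  have Se': "Se c' = Se c" using c' by simp
  have disj: "inv_disj P c" and exp: "inv_exp P c" and cov: "inv_cov P c" using I by (auto simp: inv_def)
  have "inv_disj P c'" using disj p unfolding inv_disj_def hd' tl' by (metis)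
  moreover have "inv_exp P c'" using exp by (auto simp: inv_exp_def contracted_def hd' tl' Se')
  moreover have "inv_cov P c'"
    using cov p unfolding inv_cov_def hd' tl' Se' by (metis)
  moreover have "inv_und P off c' = inv_und P off c" "inv_fol P c' = inv_fol P c"
    "inv_lead P c' = inv_lead P c" "inv_fin P c' = inv_fin P c"
    by (simp_all add: inv_und_def inv_fol_def inv_lead_def inv_fin_def hd' Se')
  ultimately show ?thesis using I by (simp add: inv_def Se')
qed

lemma inv_step:
  assumes I: "inv P off c" and p: "p \<in> P" and c': "c' \<in> dle_succ P off c p"
  shows "inv P off c'"
  using step_cases[OF c']
  apply (elim disjE)
  subgoal using I by simp
  subgoal using inv_S1[OF I p] by blast
  subgoal using inv_S2[OF I p] by blast
  subgoal using inv_S3[OF I p] by blast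
  subgoal using inv_S4[OF I p] by blast
  subgoal using inv_S5[OF I p] by blast
  done

definition pw :: "'p config \<Rightarrow> 'p \<Rightarrow> nat" where
  "pw c q = (if fin c q then 0 else 1) + (if st c q = Undecided then 2 else 0) + (if contracted c q then 0 else 1)"

definition mu :: "'p set \<Rightarrow> 'p config \<Rightarrow> nat" where
  "mu P c = (\<Sum>q\<in>P. pw c q) + 3 * card (Se c)"

lemma sum_one_change:
  fixes f f' :: "'a \<Rightarrow> nat"
  assumes "finite P" "p \<in> P" "\<forall>q\<in>P. q \<noteq> p \<longrightarrow> f' q = f q" "f' p < f p + k"
  shows "sum f' P < sum f P + k"
proof -
  have "sum f' P = f' p + sum f' (P - {p})" using assms(1,2) by (simp add: sum.remove)
  also have "sum f' (P - {p}) = sum f (P - {p})" using assms(3) by (intro sum.cong) auto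
  also have "sum f P = f p + sum f (P - {p})" using assms(1,2) by (simp add: sum.remove)
  ultimately show ?thesis using assms(4) by simp
qed

lemma mu_step:
  assumes I: "inv P off c" and p: "p \<in> P" and c': "c' \<in> dle_succ P off c p"
  shows "c' = c \<or> mu P c' < mu P c"
proof -
  have finP: "finite P" and geo: "inv_geo (Se c)" and und: "inv_und P off c" using I by (auto simp: inv_def)
  have finS: "finite (Se c)" using geo by (simp add: inv_geo_def)
  from step_cases[OF c'] show ?thesis
  proof (elim disjE exE conjE)
    assume "c' = c" then show ?thesis by simp
  next
    assume h: "\<not> fin c p" "\<not> contracted c p" "c' = c\<lparr>ptail := (ptail c)(p := phead c p)\<rparr>"
    have "sum (pw c') P < sum (pw c) P + 0"
      by (rule sum_one_change[OF finP p]) (use h in \<open>auto simp: pw_def contracted_def\<close>)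
    then show ?thesis using h by (simp add: mu_def)
  next
    assume h: "\<not> fin c p" "contracted c p" "st c p \<noteq> Undecided" "c' = c\<lparr>fin := (fin c)(p := True)\<rparr>"
    have "sum (pw c') P < sum (pw c) P + 0"
      by (rule sum_one_change[OF finP p]) (use h in \<open>auto simp: pw_def contracted_def\<close>)
    then show ?thesis using h by (simp add: mu_def)
  next
    assume h: "\<not> fin c p" "contracted c p" "st c p = Undecided" "c' = c\<lparr>st := (st c)(p := Leader)\<rparr>"
    have "sum (pw c') P < sum (pw c) P + 0"
      by (rule sum_one_change[OF finP p]) (use h in \<open>auto simp: pw_def contracted_def\<close>)
    then show ?thesis using h by (simp add: mu_def)
  next
    fix u
    assume h: "\<not> fin c p" "contracted c p" "st c p = Undecided" "u \<in> Ucand P c (phead c p)"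
      "c' = c\<lparr>Se := Se c - {phead c p}, elig := (Eupd off c (phead c p))(p := (\<lambda>j. port_pt off p u j \<noteq> phead c p)),
             phead := (phead c)(p := u)\<rparr>"
    have vS: "phead c p \<in> Se c" using und p h(3) by (auto simp: inv_und_def)
    have uv: "u \<noteq> phead c p" using h(4) by (auto simp: Ucand_def)
    have "sum (pw c') P < sum (pw c) P + 3"
      by (rule sum_one_change[OF finP p]) (use h uv in \<open>auto simp: pw_def contracted_def\<close>)
    moreover have "card (Se c') + 1 = card (Se c)" using h(5) vS finS
      by (simp add: card_Diff_singleton) (metis Suc_pred card_gt_0_iff empty_iff)
    ultimately show ?thesis by (simp add: mu_def)
  next
    assume h: "\<not> fin c p" "contracted c p" "st c p = Undecided"
      "c' = c\<lparr>Se := Se c - {phead c p}, elig := Eupd off c (phead c p), st := (st c)(p := Follower)\<rparr>"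
    have vS: "phead c p \<in> Se c" using und p h(3) by (auto simp: inv_und_def)
    have "sum (pw c') P < sum (pw c) P + 3"
      by (rule sum_one_change[OF finP p]) (use h in \<open>auto simp: pw_def contracted_def\<close>)
    moreover have "card (Se c') + 1 = card (Se c)" using h(4) vS finS
      by (simp add: card_Diff_singleton) (metis Suc_pred card_gt_0_iff empty_iff)
    ultimately show ?thesis by (simp add: mu_def)
  qed
qed

lemma inv_init:
  assumes pi: "permitted_init P off c0"
  shows "inv P off c0"
proof -
  define S0 where "S0 = phead c0 ` P"
  have finP: "finite P" and neP: "P \<noteq> {}" and inj: "inj_on (phead c0) P"
    and ct: "\<forall>p\<in>P. contracted c0 p" and con: "connected_pts S0"
    and stu: "\<forall>p\<in>P. st c0 p = Undecided \<and> \<not> fin c0 p \<and>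
        (\<forall>i<6. elig c0 p i \<longleftrightarrow> \<not> outer_face S0 (port_pt off p (phead c0 p) i))"
    and Se0: "Se c0 = area S0"
    using pi by (auto simp: permitted_init_def S0_def)
  have finS0: "finite S0" using finP by (simp add: S0_def)
  have tl: "ptail c0 p = phead c0 p" if "p \<in> P" for p using ct that by (simp add: contracted_def)
  have geo: "inv_geo (Se c0)"
    using area_finite[OF finS0] area_connected[OF finS0 con] area_sc[of S0] S0_sub_area[of S0] neP
    by (auto simp: inv_geo_def Se0 S0_def)
  have disj: "inv_disj P c0" using inj tl by (auto simp: inv_disj_def inj_on_def)
  have und: "inv_und P off c0"
    using stu S0_sub_area[of S0] by (auto simp: inv_und_def Se0 S0_def area_def)
  have exp: "inv_exp P c0" using ct by (simp add: inv_exp_def)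
  have fol: "inv_fol P c0" using stu by (simp add: inv_fol_def)
  have lead: "inv_lead P c0" using stu by (simp add: inv_lead_def)
  have fi: "inv_fin P c0" using stu by (simp add: inv_fin_def)
  have cov: "inv_cov P c0"
    unfolding inv_cov_def
  proof (intro ballI)
    fix x assume x: "x \<in> Se c0"
    show "(\<exists>p\<in>P. phead c0 p = x \<and> st c0 p \<noteq> Follower) \<or>
       ((\<forall>p\<in>P. phead c0 p \<noteq> x \<and> ptail c0 p \<noteq> x) \<and> (\<forall>i. nb x i \<in> Se c0))"
    proof (cases "x \<in> S0")
      case True
      then obtain p where "p \<in> P" "phead c0 p = x" by (auto simp: S0_def)
      then show ?thesis using stu by auto
    next
      case False
      then have "\<forall>p\<in>P. phead c0 p \<noteq> x \<and> ptail c0 p \<noteq> x" using tl by (auto simp: S0_def)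
      moreover have "\<forall>i. nb x i \<in> Se c0" using area_hole_nbs[of x S0] x False by (simp add: Se0)
      ultimately show ?thesis by blast
    qed
  qed
  show ?thesis using finP geo disj und exp fol lead fi cov by (simp add: inv_def)
qed

lemma fix_props:
  assumes A: "c \<in> dle_succ P off c p" and nf: "\<not> fin c p"
  shows "contracted c p \<and> (st c p \<noteq> Undecided \<longrightarrow> (\<exists>q\<in>neighbours P c p. st c q = Undecided)) \<and>
         (st c p = Undecided \<longrightarrow> (\<exists>i<6. elig c p i) \<and> \<not> SCE (Se c) (phead c p))"
proof -
  have ct: "contracted c p"
  proof (rule ccontr)
    assume h: "\<not> contracted c p"
    then have "c = c\<lparr>ptail := (ptail c)(p := phead c p)\<rparr>" using A nf by (simp add: dle_succ_def)
    then have "ptail c p = phead c p" by (metis config.select_convs(2) config.surjective config.update_convs(2) fun_upd_same)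
    then show False using h by (simp add: contracted_def)
  qed
  have part1: "st c p \<noteq> Undecided \<longrightarrow> (\<exists>q\<in>neighbours P c p. st c q = Undecided)"
  proof (intro impI, rule ccontr)
    assume h: "st c p \<noteq> Undecided" "\<not> (\<exists>q\<in>neighbours P c p. st c q = Undecided)"
    then have "c = c\<lparr>fin := (fin c)(p := True)\<rparr>" using A nf ct by (simp add: dle_succ_def)
    then have "fin c p" by (metis config.select_convs(5) config.surjective config.update_convs(5) fun_upd_same)
    then show False using nf by simp
  qed
  have part2: "st c p = Undecided \<longrightarrow> (\<exists>i<6. elig c p i) \<and> \<not> SCE (Se c) (phead c p)"
  proof (intro impI)
    assume un: "st c p = Undecided"
    have el: "\<exists>i<6. elig c p i"
    proof (rule ccontr)
      assume h: "\<not> (\<exists>i<6. elig c p i)"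
      then have "c = c\<lparr>st := (st c)(p := Leader)\<rparr>" using A nf ct un by (simp add: dle_succ_def)
      then have "st c p = Leader" by (metis config.select_convs(3) config.surjective config.update_convs(3) fun_upd_same)
      then show False using un by simp
    qed
    have "\<not> SCE (Se c) (phead c p)"
    proof
      assume sce: "SCE (Se c) (phead c p)"
      show False
      proof (cases "Ucand P c (phead c p) = {}")
        case True
        then have "c = c\<lparr>Se := Se c - {phead c p}, elig := Eupd off c (phead c p), st := (st c)(p := Follower)\<rparr>"
          using A nf ct un el sce by (auto simp: dle_succ_def Let_def Eupd_def Ucand_def split: if_splits)
        then have "st c p = Follower" by (metis config.select_convs(3) config.surjective config.update_convs(3) fun_upd_same)
        then show False using un by simp
      next
        case False
        then obtain u where "u \<in> Ucand P c (phead c p)" "c = c\<lparr>Se := Se c - {phead c p},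
            elig := (Eupd off c (phead c p))(p := (\<lambda>j. port_pt off p u j \<noteq> phead c p)), phead := (phead c)(p := u)\<rparr>"
          using A nf ct un el sce by (auto simp: dle_succ_def Let_def Eupd_def Ucand_def split: if_splits)
        moreover then have "phead c p = u" by (metis config.select_convs(1) config.surjective config.update_convs(1) fun_upd_same)
        ultimately show False by (auto simp: Ucand_def)
      qed
    qed
    then show "(\<exists>i<6. elig c p i) \<and> \<not> SCE (Se c) (phead c p)" using el by simp
  qed
  show ?thesis using ct part1 part2 by blast
qed


lemma good_not_interior:
  assumes "good S g" shows "\<exists>i. nb g i \<notin> S"
proof (rule ccontr)
  assume h: "\<not> (\<exists>i. nb g i \<notin> S)"
  obtain i k where ik: "k \<le> 3" "{j. j < 6 \<and> nb g j \<in> S} = cyc_int i k" using assms by (auto simp: good_def)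
  have "{j. j < 6 \<and> nb g j \<in> S} = {..<6}" using h by auto
  then have "card (cyc_int i k) = 6" using ik(2) by simp
  then show False using card_cyc_int_le[of i k] ik(1) by simp
qed

lemma fixpoint_all_fin:
  assumes I: "inv P off c" and fx: "\<forall>p\<in>P. c \<in> dle_succ P off c p"
  shows "\<forall>p\<in>P. fin c p"
proof (rule ccontr)
  assume "\<not> (\<forall>p\<in>P. fin c p)"
  then obtain p0 where p0: "p0 \<in> P" "\<not> fin c p0" by blast
  have geo: "inv_geo (Se c)" and disj: "inv_disj P c" and und: "inv_und P off c" and lead: "inv_lead P c"
    and fi: "inv_fin P c" and cov: "inv_cov P c" using I by (auto simp: inv_def)
  have fp: "contracted c p \<and> (st c p \<noteq> Undecided \<longrightarrow> (\<exists>q\<in>neighbours P c p. st c q = Undecided)) \<and>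
         (st c p = Undecided \<longrightarrow> (\<exists>i<6. elig c p i) \<and> \<not> SCE (Se c) (phead c p))"
    if "p \<in> P" "\<not> fin c p" for p using fix_props[of c P off p] fx that by blast
  obtain q where q: "q \<in> P" "st c q = Undecided"
  proof (cases "st c p0 = Undecided")
    case True then show ?thesis using that p0 by blast
  next
    case False
    then obtain q where "q \<in> neighbours P c p0" "st c q = Undecided" using fp[OF p0] by blast
    then show ?thesis using that by (auto simp: neighbours_def)
  qed
  have qnf: "\<not> fin c q" using fi q by (auto simp: inv_fin_def)
  obtain i where "i < 6" "elig c q i" using fp[OF q(1) qnf] q(2) by blast
  then have "port_pt off q (phead c q) i \<in> Se c" "phead c q \<in> Se c" using und q by (auto simp: inv_und_def)
  moreover have "port_pt off q (phead c q) i \<noteq> phead c q" by (simp add: port_nb nb_neq)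
  ultimately have sub2: "{port_pt off q (phead c q) i, phead c q} \<subseteq> Se c" "card {port_pt off q (phead c q) i, phead c q} = 2"
    by auto
  have finS: "finite (Se c)" using geo by (simp add: inv_geo_def)
  have c2: "2 \<le> card (Se c)" using card_mono[OF finS sub2(1)] sub2(2) by simp
  obtain g where g: "g \<in> Se c" "good (Se c) g"
    using two_good[of "Se c"] geo c2 by (auto simp: inv_geo_def)
  have sce: "SCE (Se c) g" using good_SCE[OF g(2)] geo by (simp add: inv_geo_def)
  have "(\<exists>r\<in>P. phead c r = g \<and> st c r \<noteq> Follower) \<or>
       ((\<forall>r\<in>P. phead c r \<noteq> g \<and> ptail c r \<noteq> g) \<and> (\<forall>i. nb g i \<in> Se c))"
    using cov g(1) unfolding inv_cov_def by blast
  then obtain r where r: "r \<in> P" "phead c r = g" "st c r \<noteq> Follower"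
    using good_not_interior[OF g(2)] by blast
  show False
  proof (cases "st c r")
    case Undecided
    then have "\<not> fin c r" using fi r by (auto simp: inv_fin_def)
    then show False using fp[OF r(1)] Undecided sce r(2) by simp
  next
    case Leader
    then have "Se c = {g}" using lead r by (auto simp: inv_lead_def)
    then show False using c2 by simp
  next
    case Follower then show False using r by simp
  qed
qed

lemma final_leader:
  assumes I: "inv P off c" and af: "\<forall>p\<in>P. fin c p"
  shows "\<exists>l\<in>P. st c l = Leader \<and> (\<forall>q\<in>P. q \<noteq> l \<longrightarrow> st c q = Follower)"
proof -
  have geo: "inv_geo (Se c)" and disj: "inv_disj P c" and lead: "inv_lead P c"
    and fi: "inv_fin P c" and cov: "inv_cov P c" using I by (auto simp: inv_def)
  have dec: "\<forall>p\<in>P. st c p \<noteq> Undecided" using af fi by (auto simp: inv_fin_def)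
  have finS: "finite (Se c)" and neS: "Se c \<noteq> {}" using geo by (auto simp: inv_geo_def)
  have fne: "f_of ` Se c \<noteq> {}" "finite (f_of ` Se c)" using neS finS by auto
  obtain x where x: "x \<in> Se c" "f_of x = Max (f_of ` Se c)" using Max_in[OF fne(2,1)] by auto
  have "\<exists>l\<in>P. st c l = Leader"
  proof (rule ccontr)
    assume nl: "\<not> (\<exists>l\<in>P. st c l = Leader)"
    then have "\<forall>p\<in>P. st c p = Follower" using dec by (metis pstatus.exhaust)
    then have "\<forall>i. nb x i \<in> Se c" using cov x(1) by (auto simp: inv_cov_def)
    then have "nb x 0 \<in> Se c" by blast
    then have "f_of (nb x 0) \<le> f_of x" using x finS by simp
    then show False using f_nb(1)[of x] by simp
  qed
  then obtain l where l: "l \<in> P" "st c l = Leader" by blast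
  have "\<forall>q\<in>P. q \<noteq> l \<longrightarrow> st c q = Follower"
  proof (intro ballI impI)
    fix q assume q: "q \<in> P" "q \<noteq> l"
    show "st c q = Follower"
    proof (cases "st c q")
      case Leader
      then have "Se c = {phead c q}" "Se c = {phead c l}" using lead q l by (auto simp: inv_lead_def)
      then have "phead c q = phead c l" by simp
      then show ?thesis using disj q l by (auto simp: inv_disj_def)
    next
      case Undecided then show ?thesis using dec q by simp
    qed simp
  qed
  then show ?thesis using l by blast
qed

theorem theorem4p3:
  fixes P :: "'p set" and off :: "'p \<Rightarrow> nat"
    and c :: "nat \<Rightarrow> 'p config" and a :: "nat \<Rightarrow> 'p"
  assumes "permitted_init P off (c 0)"
    and "fair_exec P off c a"
  shows "(\<forall>p\<in>P. \<exists>n. fin (c n) p) \<and>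
         (\<exists>n. \<exists>l\<in>P. st (c n) l = Leader \<and> (\<forall>q\<in>P. q \<noteq> l \<longrightarrow> st (c n) q = Follower))"
proof -
  have step: "a n \<in> P" "c (Suc n) \<in> dle_succ P off (c n) (a n)" for n
    using assms(2) by (auto simp: fair_exec_def)
  have fair: "\<forall>p\<in>P. \<forall>n. \<exists>m\<ge>n. a m = p" using assms(2) by (simp add: fair_exec_def)
  have I: "inv P off (c n)" for n
  proof (induction n)
    case 0 then show ?case using inv_init[OF assms(1)] .
  next
    case (Suc n) then show ?case using inv_step[OF Suc.IH step(1) step(2)] by simp
  qed
  have ms: "c (Suc n) = c n \<or> mu P (c (Suc n)) < mu P (c n)" for n
    using mu_step[OF I step(1) step(2)] by blast
  have ms1: "mu P (c (Suc n)) \<le> mu P (c n)" for n using ms[of n] by auto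
  have mono: "mu P (c (n + k)) \<le> mu P (c n)" for n k
  proof (induction k)
    case 0 then show ?case by simp
  next
    case (Suc k) then show ?case using ms1[of "n + k"] by simp
  qed
  define mn where "mn = (LEAST k. \<exists>n. mu P (c n) = k)"
  have "\<exists>n. mu P (c n) = mn" unfolding mn_def by (rule LeastI_ex) auto
  then obtain N where N: "mu P (c N) = mn" by blast
  have least: "mn \<le> mu P (c n)" for n unfolding mn_def by (rule Least_le) auto
  have constk: "c (N + k) = c N" for k
  proof (induction k)
    case 0 then show ?case by simp
  next
    case (Suc k)
    have "mu P (c (Suc (N + k))) \<le> mu P (c (N + k))" by (rule ms1)
    moreover have "mu P (c (N + k)) = mn" using Suc.IH N by simp
    moreover have "mn \<le> mu P (c (Suc (N + k)))" by (rule least)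
    ultimately have "\<not> mu P (c (Suc (N + k))) < mu P (c (N + k))" by simp
    then have "c (Suc (N + k)) = c (N + k)" using ms[of "N + k"] by blast
    then show ?case using Suc.IH by simp
  qed
  have const: "c n = c N" if "N \<le> n" for n
    using constk[of "n - N"] that by simp
  have fx: "\<forall>p\<in>P. c N \<in> dle_succ P off (c N) p"
  proof
    fix p assume p: "p \<in> P"
    obtain m where m: "m \<ge> N" "a m = p" using fair p by blast
    have "c (Suc m) \<in> dle_succ P off (c m) (a m)" by (rule step(2))
    then show "c N \<in> dle_succ P off (c N) p" using const[of m] const[of "Suc m"] m by simp
  qed
  have af: "\<forall>p\<in>P. fin (c N) p" by (rule fixpoint_all_fin[OF I fx])
  show ?thesis using af final_leader[OF I af] by blast
qed


end
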